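(* For every $f\in V_{\mathcal{B}}$, $\lim_{n\to\infty}\|\mathcal{L}^nf\|_s=0$. Moreover $\mathcal{L}$ maps $V_{\mathcal{B}}$ into itself and the resolvent $(\mathrm{Id}-\mathcal{L})^{-1}:V_{\mathcal{B}}\to V_{\mathcal{B}}$ is a well-defined bounded operator.
   Context: Let $b:\mathbb{R}^d\to\mathbb{R}^d$ satisfy (A) local Lipschitz continuity: for each $x_0\in\mathbb{R}^d$ there are $K>0$, $\delta_0>0$ with $|b(x_0)-b(x)|\le K|x_0-x|$ whenever $|x_0-x|<\delta_0$; and (B) dissipativity: there are $c_1\in\mathbb{R}$, $c_2>0$ with $\langle b(x),x\rangle\le c_1-c_2|x|^2$ for all $x\in\mathbb{R}^d$. Let $X^x_t$ be the solution of $dX_t^x=b(X_t^x)\,dt+dW_t$, $X_0^x=x$, with $W$ a standard Brownian motion in $\mathbb{R}^d$, and let $\theta_t$ be the flow of $\dot\theta=b(\theta)$. It is known that the law of $X_1^x$ has a density $\kappa(x,y)$ (in $y$, w.r.t. Lebesgue measure), continuous in $(x,y)$, and that there are constants $\lambda_0,\lambda_1\in(0,1]$, $C_0,C_1\ge 1$ such that for all $x,y$: $C_0^{-1}e^{-|\theta_1(x)-y|^2/\lambda_0}\le\kappa(x,y)\le C_0e^{-\lambda_0|\theta_1(x)-y|^2}$ and $|\nabla_x\kappa(x,y)|,|\nabla_y\kappa(x,y)|\le C_1e^{-\lambda_1|\theta_1(x)-y|^2}$. The transfer operator $\mathcal{L}=\mathcal{L}_0:L^1(\mathbb{R}^d)\to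 L^1(\mathbb{R}^d)$ is $\mathcal{L}f(y)=\int_{\mathbb{R}^d}\kappa(x,y)f(x)\,dx$. Spaces: for $\alpha\ge0$ let $\rho_\alpha(x)=(1+|x|^2)^{\alpha/2}$ and let $L^1_\alpha$ be the space of measurable $f:\mathbb{R}^d\to\mathbb{R}$ with $\|f\|_{L^1_\alpha}=\int\rho_\alpha(x)|f(x)|\,dx<\infty$. Fix a compact set $D\subset\mathbb{R}^d$ (a compact neighbourhood of $0$). The strong norm is $\|f\|_s=\|f\|_{L^1_2}+\|1_Df\|_{L^2}$ and the strong space is $\mathcal{B}=\{f\in L^1_2:\|f\|_s<\infty\}$. Set $V_{\mathcal{B}}=\{f\in\mathcal{B}:\int f\,dx=0\}$ and $V_{L^1}=\{f\in L^1:\int f\,dx=0\}$. *)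

theory Defs
  imports "HOL-Probability.Probability"
begin

definition gauss_density :: "real \<Rightarrow> real^'d \<Rightarrow> real" where
  "gauss_density \<tau> z =
     (2 * pi * \<tau>) powr (- real CARD('d) / 2) * exp (- (norm z)\<^sup>2 / (2 * \<tau>))"

definition std_brownian :: "'a measure \<Rightarrow> (real \<Rightarrow> 'a \<Rightarrow> real^'d) \<Rightarrow> bool" where
  "std_brownian M W \<longleftrightarrow>
     prob_space M \<and>
     (\<forall>\<omega>\<in>space M. W 0 \<omega> = 0 \<and> continuous_on {0..} (\<lambda>t. W t \<omega>)) \<and>
     (\<forall>s t. 0 \<le> s \<and> s < t \<longrightarrow>
        distributed M lborel (\<lambda>\<omega>. W t \<omega> - W s \<omega>) (\<lambda>z. ennreal (gauss_density (t - s) z))) \<and>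
     (\<forall>ts :: real list. sorted_wrt (<) ts \<and> (\<forall>t\<in>set ts. 0 \<le> t) \<longrightarrow>
        prob_space.indep_vars M (\<lambda>_. borel) (\<lambda>i \<omega>. W (ts ! Suc i) \<omega> - W (ts ! i) \<omega>)
          {..<length ts - 1})"

definition sde_solution ::
  "'a measure \<Rightarrow> (real^'d \<Rightarrow> real^'d) \<Rightarrow> (real \<Rightarrow> 'a \<Rightarrow> real^'d) \<Rightarrow> real^'d
     \<Rightarrow> (real \<Rightarrow> 'a \<Rightarrow> real^'d) \<Rightarrow> bool" where
  "sde_solution M b W x X \<longleftrightarrow>
     (\<forall>\<omega>\<in>space M. continuous_on {0..} (\<lambda>t. X t \<omega>) \<and>
        (\<forall>t\<ge>0. X t \<omega> = x + integral {0..t} (\<lambda>s. b (X s \<omega>)) + W t \<omega>))"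

definition is_forward_flow :: "(real^'d \<Rightarrow> real^'d) \<Rightarrow> (real \<Rightarrow> real^'d \<Rightarrow> real^'d) \<Rightarrow> bool" where
  "is_forward_flow b \<theta> \<longleftrightarrow>
     (\<forall>x. \<theta> 0 x = x \<and>
        (\<forall>t\<ge>0. ((\<lambda>s. \<theta> s x) has_vector_derivative b (\<theta> t x)) (at t within {0..})))"

definition transfer :: "(real^'d \<Rightarrow> real^'d \<Rightarrow> real) \<Rightarrow> (real^'d \<Rightarrow> real) \<Rightarrow> real^'d \<Rightarrow> real" where
  "transfer \<kappa> f y = (\<integral>x. \<kappa> x y * f x \<partial>lebesgue)"

definition L1_2_norm :: "(real^'d \<Rightarrow> real) \<Rightarrow> ennreal" where
  "L1_2_norm f = (\<integral>\<^sup>+x. ennreal ((1 + (norm x)\<^sup>2) * \<bar>f x\<bar>) \<partial>lebesgue)"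

definition L2_on_norm :: "(real^'d) set \<Rightarrow> (real^'d \<Rightarrow> real) \<Rightarrow> ennreal" where
  "L2_on_norm D f =
     (let I = (\<integral>\<^sup>+x. ennreal (indicator D x * (f x)\<^sup>2) \<partial>lebesgue)
      in if I = \<infinity> then \<infinity> else ennreal (sqrt (enn2real I)))"

definition strong_norm :: "(real^'d) set \<Rightarrow> (real^'d \<Rightarrow> real) \<Rightarrow> ennreal" where
  "strong_norm D f = L1_2_norm f + L2_on_norm D f"

definition strong_space :: "(real^'d) set \<Rightarrow> (real^'d \<Rightarrow> real) set" where
  "strong_space D = {f. f \<in> borel_measurable lebesgue \<and> strong_norm D f < \<infinity>}"

definition V_B :: "(real^'d) set \<Rightarrow> (real^'d \<Rightarrow> real) set" where
  "V_B D = {f \<in> strong_space D. (\<integral>x. f x \<partial>lebesgue) = 0}"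

end

theory Submission
  imports Defs
begin

lemma sf_leb: "sigma_finite_measure (lebesgue :: ('a::euclidean_space) measure)"
proof -
  obtain A where A: "countable A" "A \<subseteq> sets (lborel::'a measure)" "\<Union>A = space lborel" "\<forall>a\<in>A. emeasure lborel a \<noteq> \<infinity>"
    using lborel.sigma_finite_countable by blast
  show ?thesis
    apply unfold_locales
    apply (rule exI[of _ A])
    using A by (auto simp: emeasure_completion)
qed
interpretation leb: sigma_finite_measure "lebesgue :: ('a::euclidean_space) measure" by (rule sf_leb)
interpretation leb2: pair_sigma_finite "lebesgue :: ('a::euclidean_space) measure" "lebesgue :: ('b::euclidean_space) measure" ..

locale kern =
  fixes \<kappa> :: "real^'d \<Rightarrow> real^'d \<Rightarrow> real" and C0 :: real
  assumes kmeas[measurable]: "(\<lambda>p. \<kappa> (fst p) (snd p)) \<in> borel_measurable (lebesgue \<Otimes>\<^sub>M lebesgue)"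
    and knn: "\<And>x y. 0 \<le> \<kappa> x y"
    and kbd: "\<And>x y. \<kappa> x y \<le> C0"
begin

lemma kmeas1[measurable]: "(\<lambda>x. \<kappa> x y) \<in> borel_measurable lebesgue"
proof -
  have "(\<lambda>x. (x, y)) \<in> lebesgue \<rightarrow>\<^sub>M lebesgue \<Otimes>\<^sub>M lebesgue" by measurable
  from measurable_compose[OF this kmeas] show ?thesis by simp
qed

lemma test: 
  assumes [measurable]: "h \<in> borel_measurable lebesgue" "w \<in> borel_measurable lebesgue"
  shows "(\<lambda>p. ennreal (w (snd p) * \<kappa> (fst p) (snd p) * h (fst p))) \<in> borel_measurable (lebesgue \<Otimes>\<^sub>M lebesgue)"
  by measurable
end

definition Vw :: "real^'d \<Rightarrow> real" where "Vw x = 1 + (norm x)\<^sup>2"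
definition NV :: "(real^'d \<Rightarrow> real) \<Rightarrow> ennreal" where "NV f = (\<integral>\<^sup>+x. ennreal (Vw x * \<bar>f x\<bar>) \<partial>lebesgue)"
definition N1 :: "(real^'d \<Rightarrow> real) \<Rightarrow> ennreal" where "N1 f = (\<integral>\<^sup>+x. ennreal \<bar>f x\<bar> \<partial>lebesgue)"
definition good :: "(real^'d \<Rightarrow> real) \<Rightarrow> bool" where "good f \<longleftrightarrow> f \<in> borel_measurable lebesgue \<and> NV f < \<infinity>"
definition fp :: "(real^'d \<Rightarrow> real) \<Rightarrow> real^'d \<Rightarrow> real" where "fp f x = max (f x) 0"
definition fn :: "(real^'d \<Rightarrow> real) \<Rightarrow> real^'d \<Rightarrow> real" where "fn f x = max (- f x) 0"


lemma Vw_ge1: "1 \<le> Vw x" by (simp add: Vw_def)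
lemma Vw_meas[measurable]: "Vw \<in> borel_measurable lebesgue"
  by (rule measurable_completion) (unfold Vw_def measurable_lborel2, measurable)
lemma fp_meas[measurable]: "f \<in> borel_measurable M \<Longrightarrow> (\<lambda>x. fp f x) \<in> borel_measurable M"
  unfolding fp_def by measurable
lemma fn_meas[measurable]: "f \<in> borel_measurable M \<Longrightarrow> (\<lambda>x. fn f x) \<in> borel_measurable M"
  unfolding fn_def by measurable
lemma fp_nn: "0 \<le> fp f x" and fn_nn: "0 \<le> fn f x" and fpn_diff: "f x = fp f x - fn f x"
  and fpn_abs: "\<bar>f x\<bar> = fp f x + fn f x" and fp_le: "fp f x \<le> \<bar>f x\<bar>" and fn_le: "fn f x \<le> \<bar>f x\<bar>"
  by (auto simp: fp_def fn_def)

lemma N1_le_NV: "N1 f \<le> NV f"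
  unfolding N1_def NV_def
  by (intro nn_integral_mono ennreal_leI) (metis mult_right_mono[OF Vw_ge1 abs_ge_zero] mult_1)

lemma good_N1: "good f \<Longrightarrow> N1 f < \<infinity>"
  using N1_le_NV good_def le_less_trans by blast

lemma good_integrable: "good f \<Longrightarrow> integrable lebesgue f"
  using good_N1[of f] unfolding good_def N1_def
  by (intro integrableI_bounded) auto

context kern begin

lemma kmeas2[measurable]: "(\<lambda>p. \<kappa> (snd p) (fst p)) \<in> borel_measurable (lebesgue \<Otimes>\<^sub>M lebesgue)"
proof -
  have "(\<lambda>p. \<kappa> (fst p) (snd p)) \<circ> (\<lambda>(x,y). (y, x)) \<in> borel_measurable (lebesgue \<Otimes>\<^sub>M lebesgue)"
    by (rule measurable_comp[OF measurable_pair_swap' kmeas])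
  then show ?thesis by (simp add: o_def case_prod_beta)
qed

lemma C0_nn: "0 \<le> C0" using knn[of 0 0] kbd[of 0 0] by linarith

definition Lp :: "(real^'d \<Rightarrow> real) \<Rightarrow> real^'d \<Rightarrow> ennreal" where
  "Lp h y = (\<integral>\<^sup>+x. ennreal (\<kappa> x y * h x) \<partial>lebesgue)"

lemma Lp_meas[measurable]: assumes [measurable]: "h \<in> borel_measurable lebesgue" shows "Lp h \<in> borel_measurable lebesgue"
  unfolding Lp_def
  by (rule leb.borel_measurable_nn_integral) measurable

lemma Lp_le: assumes "\<And>x. 0 \<le> h x" "\<And>x. h x \<le> \<bar>f x\<bar>" and [measurable]: "f \<in> borel_measurable lebesgue" shows "Lp h y \<le> ennreal C0 * N1 f"
proof -
  have "Lp h y \<le> (\<integral>\<^sup>+x. ennreal (C0 * \<bar>f x\<bar>) \<partial>lebesgue)"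
    unfolding Lp_def using assms knn kbd C0_nn
    by (intro nn_integral_mono) (auto intro!: ennreal_leI mult_mono)
  also have "\<dots> = ennreal C0 * N1 f" unfolding N1_def 
    by (simp add: ennreal_mult C0_nn) (rule nn_integral_cmult, measurable)
  finally show ?thesis .
qed

lemma good_Lp_fin: assumes "good f" shows "Lp (fp f) y < \<infinity>" "Lp (fn f) y < \<infinity>"
proof -
  have m: "f \<in> borel_measurable lebesgue" using assms good_def by auto
  have "ennreal C0 * N1 f < \<infinity>" using good_N1[OF assms] by (simp add: ennreal_mult_less_top)
  then show "Lp (fp f) y < \<infinity>" "Lp (fn f) y < \<infinity>"
    using Lp_le[of "fp f" f, OF fp_nn fp_le m] Lp_le[of "fn f" f, OF fn_nn fn_le m]
    by (meson order.strict_trans1)+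
qed

lemma N1_int_k: assumes [measurable]: "f \<in> borel_measurable lebesgue" and fin: "N1 f < \<infinity>"
  shows "integrable lebesgue (\<lambda>x. \<kappa> x y * f x)"
proof (rule integrableI_bounded)
  show "(\<lambda>x. \<kappa> x y * f x) \<in> borel_measurable lebesgue" by measurable
  have "(\<integral>\<^sup>+ x. ennreal (norm (\<kappa> x y * f x)) \<partial>lebesgue) \<le> (\<integral>\<^sup>+x. ennreal (C0 * \<bar>f x\<bar>) \<partial>lebesgue)"
    using knn kbd C0_nn
    by (intro nn_integral_mono) (auto simp: abs_mult intro!: ennreal_leI mult_mono)
  also have "\<dots> = ennreal C0 * N1 f" unfolding N1_def 
    by (simp add: ennreal_mult C0_nn) (rule nn_integral_cmult, measurable)
  also have "\<dots> < \<infinity>" using fin by (simp add: ennreal_mult_less_top)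
  finally show "(\<integral>\<^sup>+ x. ennreal (norm (\<kappa> x y * f x)) \<partial>lebesgue) < \<infinity>" .
qed

lemma good_int_k: "good f \<Longrightarrow> integrable lebesgue (\<lambda>x. \<kappa> x y * f x)"
  using N1_int_k good_N1 good_def by blast

lemma N1_fp: "N1 (fp f) \<le> N1 f" "N1 (fn f) \<le> N1 f"
  unfolding N1_def by (auto intro!: nn_integral_mono ennreal_leI simp: fp_def fn_def)

lemma transfer_split: assumes "good f"
  shows "transfer \<kappa> f y = enn2real (Lp (fp f) y) - enn2real (Lp (fn f) y)"
proof -
  have m[measurable]: "f \<in> borel_measurable lebesgue" using assms good_def by auto
  have ip: "integrable lebesgue (\<lambda>x. \<kappa> x y * fp f x)" "integrable lebesgue (\<lambda>x. \<kappa> x y * fn f x)"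
    using N1_int_k N1_fp good_N1[OF assms] by (meson fp_meas fn_meas m order.strict_trans1)+
  have "transfer \<kappa> f y = (\<integral>x. \<kappa> x y * fp f x - \<kappa> x y * fn f x \<partial>lebesgue)"
    unfolding transfer_def by (intro Bochner_Integration.integral_cong) (auto simp: fpn_diff[of f] algebra_simps)
  also have "\<dots> = (\<integral>x. \<kappa> x y * fp f x \<partial>lebesgue) - (\<integral>x. \<kappa> x y * fn f x \<partial>lebesgue)"
    using ip by (rule Bochner_Integration.integral_diff)
  also have "\<dots> = enn2real (Lp (fp f) y) - enn2real (Lp (fn f) y)"
    unfolding Lp_def using knn fp_nn fn_nn
    by (subst (1 2) integral_eq_nn_integral) (auto intro!: AE_I2 mult_nonneg_nonneg)
  finally show ?thesis .
qed

end

lemma ennreal_fp: "ennreal (fp f x) = ennreal (f x)" "ennreal (fn f x) = ennreal (- f x)"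
  by (auto simp: fp_def fn_def max_def ennreal_neg)

lemma integral_fpn: assumes "integrable lebesgue f"
  shows "integral\<^sup>L lebesgue f = enn2real (\<integral>\<^sup>+x. fp f x \<partial>lebesgue) - enn2real (\<integral>\<^sup>+x. fn f x \<partial>lebesgue)"
  using real_lebesgue_integral_def[OF assms] by (simp add: ennreal_fp)

lemma N1_split: assumes [measurable]: "f \<in> borel_measurable lebesgue"
  shows "N1 f = (\<integral>\<^sup>+x. fp f x \<partial>lebesgue) + (\<integral>\<^sup>+x. fn f x \<partial>lebesgue)"
  unfolding N1_def
  by (subst nn_integral_add[symmetric]) (auto simp: fpn_abs[of f] fp_nn fn_nn intro!: nn_integral_cong)

context kern begin

lemma kmeas1'[measurable]: "(\<lambda>y. \<kappa> x y) \<in> borel_measurable lebesgue"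
proof -
  have "(\<lambda>y. (x, y)) \<in> lebesgue \<rightarrow>\<^sub>M lebesgue \<Otimes>\<^sub>M lebesgue" by measurable
  from measurable_compose[OF this kmeas] show ?thesis by simp
qed

lemma Lp_tonelli:
  assumes [measurable]: "h \<in> borel_measurable lebesgue" "w \<in> borel_measurable lebesgue"
    and hnn: "\<And>x. 0 \<le> h x" and wnn: "\<And>y. 0 \<le> w y"
  shows "(\<integral>\<^sup>+y. ennreal (w y) * Lp h y \<partial>lebesgue)
       = (\<integral>\<^sup>+x. ennreal (h x) * (\<integral>\<^sup>+y. ennreal (w y * \<kappa> x y) \<partial>lebesgue) \<partial>lebesgue)"
proof -
  have "(\<integral>\<^sup>+y. ennreal (w y) * Lp h y \<partial>lebesgue) = (\<integral>\<^sup>+y. (\<integral>\<^sup>+x. ennreal (w y * \<kappa> x y * h x) \<partial>lebesgue) \<partial>lebesgue)"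
    unfolding Lp_def
    by (intro nn_integral_cong, subst nn_integral_cmult[symmetric])
       (auto simp: ennreal_mult'[symmetric] wnn mult.assoc intro!: nn_integral_cong)
  also have "\<dots> = (\<integral>\<^sup>+x. (\<integral>\<^sup>+y. ennreal (w y * \<kappa> x y * h x) \<partial>lebesgue) \<partial>lebesgue)"
    by (rule leb2.Fubini') (simp add: case_prod_beta, measurable)
  also have "\<dots> = (\<integral>\<^sup>+x. ennreal (h x) * (\<integral>\<^sup>+y. ennreal (w y * \<kappa> x y) \<partial>lebesgue) \<partial>lebesgue)"
    by (intro nn_integral_cong, subst nn_integral_cmult[symmetric])
       (auto simp: ennreal_mult'[symmetric] hnn mult.commute mult.left_commute intro!: nn_integral_cong)
  finally show ?thesis .
qed

end

locale harris = kern \<kappa> C0 for \<kappa> :: "real^'d \<Rightarrow> real^'d \<Rightarrow> real" and C0 +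
  fixes \<gamma> K \<epsilon> R vb :: real
  assumes kmass: "\<And>x. (\<integral>\<^sup>+y. ennreal (\<kappa> x y) \<partial>lebesgue) = 1"
    and lyap: "\<And>x. (\<integral>\<^sup>+y. ennreal (Vw y * \<kappa> x y) \<partial>lebesgue) \<le> ennreal (\<gamma> * Vw x + K)"
    and minor: "\<And>x y. Vw x \<le> R \<Longrightarrow> norm y \<le> 1 \<Longrightarrow> \<epsilon> \<le> \<kappa> x y"
    and gam: "0 \<le> \<gamma>" "\<gamma> < 1" and Kpos: "0 < K" and epos: "0 < \<epsilon>" and Rbig: "8 * K / (1 - \<gamma>) \<le> R"
    and vb_def: "vb = measure lborel (cball (0::real^'d) 1)"
begin

definition "\<beta> = min 1 (\<epsilon> * vb / (4 * K))"
definition "\<gamma>0 = (1 + \<gamma>) / 2"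
definition "\<delta> = \<beta> * (1 - \<gamma>0) / (4 / R + \<beta>)"
definition "\<alpha> = max (max (1 - \<epsilon> * vb / 4) \<gamma>) (1 - \<delta>)"
definition Tn :: "(real^'d \<Rightarrow> real) \<Rightarrow> ennreal" where "Tn f = N1 f + ennreal \<beta> * NV f"

lemma vb_pos: "0 < vb" unfolding vb_def by simp
lemma Rpos: "0 < R"
proof -
  have "0 < 8 * K / (1 - \<gamma>)" using Kpos gam by simp
  then show ?thesis using Rbig by linarith
qed
lemma beta_pos: "0 < \<beta>" and beta_le1: "\<beta> \<le> 1" and beta_K: "\<beta> * K \<le> \<epsilon> * vb / 4"
  using vb_pos epos Kpos by (auto simp: \<beta>_def min_def field_simps)
lemma den_pos: "0 < 4 / R + \<beta>" using beta_pos Rpos by (simp add: add_pos_pos)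
lemma delta_pos: "0 < \<delta>" unfolding \<delta>_def \<gamma>0_def using beta_pos den_pos gam by (auto intro!: divide_pos_pos)
lemma delta_eq: "\<delta> * (4 / R + \<beta>) = \<beta> * (1 - \<gamma>0)"
  unfolding \<delta>_def using den_pos by simp
lemma alpha_lt1: "\<alpha> < 1" and alpha_nn: "0 \<le> \<alpha>"
  unfolding \<alpha>_def using vb_pos epos gam delta_pos by auto
lemma K_R: "4 * K / R \<le> (1 - \<gamma>) / 2"
proof -
  have "8 * K \<le> R * (1 - \<gamma>)" using Rbig gam by (simp add: field_simps)
  then show ?thesis using Rpos by (simp add: field_simps)
qed

lemma absdiff: "(c::real) \<le> u \<Longrightarrow> c \<le> v \<Longrightarrow> 0 \<le> c \<Longrightarrow> \<bar>u - v\<bar> + 2*c \<le> u + v" by arith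

lemma emeas_ball: "emeasure lebesgue (cball (0::real^'d) 1) = ennreal vb"
  unfolding vb_def
  using emeasure_lborel_cball_finite[of "0::real^'d" 1]
  by (simp add: emeasure_completion measure_def less_top[symmetric])

lemma w_ball: "ennreal vb \<le> (\<integral>\<^sup>+(y::real^'d). ennreal ((1 + \<beta> * Vw y) * (if norm y \<le> 1 then 1 else 0)) \<partial>lebesgue)"
proof -
  have "ennreal vb = (\<integral>\<^sup>+y. indicator (cball (0::real^'d) 1) y \<partial>lebesgue)"
    using emeas_ball by simp
  also have "\<dots> \<le> (\<integral>\<^sup>+(y::real^'d). ennreal ((1 + \<beta> * Vw y) * (if norm y \<le> 1 then 1 else 0)) \<partial>lebesgue)"
  proof (rule nn_integral_mono)
    fix y :: "real^'d" assume "y \<in> space lebesgue" show "indicator (cball (0::real^'d) 1) y \<le> ennreal ((1 + \<beta> * Vw y) * (if norm y \<le> 1 then 1 else 0))"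
      using beta_pos Vw_ge1[of y] by (auto simp: indicator_def mem_cball)
  qed
  finally show ?thesis .
qed

lemma w_kern: "(\<integral>\<^sup>+y. ennreal ((1 + \<beta> * Vw y) * \<kappa> x y) \<partial>lebesgue) \<le> ennreal (1 + \<beta> * (\<gamma> * Vw x + K))"
proof -
  have "(\<integral>\<^sup>+y. ennreal ((1 + \<beta> * Vw y) * \<kappa> x y) \<partial>lebesgue)
      = (\<integral>\<^sup>+y. ennreal (\<kappa> x y) + ennreal \<beta> * ennreal (Vw y * \<kappa> x y) \<partial>lebesgue)"
  proof (rule nn_integral_cong)
    fix y
    have a: "0 \<le> \<kappa> x y" "0 \<le> Vw y * \<kappa> x y" "0 \<le> \<beta>" using knn Vw_ge1[of y] beta_pos by auto
    have "(1 + \<beta> * Vw y) * \<kappa> x y = \<kappa> x y + \<beta> * (Vw y * \<kappa> x y)" by (simp add: algebra_simps)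
    then show "ennreal ((1 + \<beta> * Vw y) * \<kappa> x y) = ennreal (\<kappa> x y) + ennreal \<beta> * ennreal (Vw y * \<kappa> x y)"
      using a by (simp add: ennreal_plus ennreal_mult)
  qed
  also have "\<dots> = 1 + ennreal \<beta> * (\<integral>\<^sup>+y. ennreal (Vw y * \<kappa> x y) \<partial>lebesgue)"
    by (subst nn_integral_add) (auto simp: kmass nn_integral_cmult)
  also have "\<dots> \<le> 1 + ennreal \<beta> * ennreal (\<gamma> * Vw x + K)"
    by (intro add_mono mult_left_mono lyap) auto
  also have "\<dots> = ennreal (1 + \<beta> * (\<gamma> * Vw x + K))"
  proof -
    have "0 \<le> \<beta> * (\<gamma> * Vw x + K)" using beta_pos gam Kpos Vw_ge1[of x] by simp
    then show ?thesis using beta_pos by (simp add: ennreal_mult'[symmetric] ennreal_plus)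
  qed
  finally show ?thesis .
qed

end

context harris begin

lemma harris_arith:
  assumes H: "Ir + 2*\<epsilon>*c * vb \<le> (1+\<beta>*K)*n1 + \<beta>*\<gamma> * nv"
    and n1: "n1 = 2*m" and ma: "m \<le> ar + nv/R" and mb: "m \<le> br + nv/R"
    and c: "c = min ar br" and ar: "0 \<le> ar" and br: "0 \<le> br" and m0: "0 \<le> m" and nv0: "0 \<le> nv"
  shows "Ir \<le> \<alpha> * (n1 + \<beta> * nv)"
proof (cases "nv \<le> R * m / 2")
  case True
  then have "nv / R \<le> m / 2" using Rpos by (simp add: field_simps)
  then have cm: "m / 2 \<le> c" using ma mb c by linarith
  have e0: "0 \<le> \<epsilon> * vb" using epos vb_pos by simp
  have "\<epsilon> * vb * m \<le> 2*\<epsilon>*c * vb" using mult_left_mono[OF cm e0] by (simp add: algebra_simps)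
  moreover have "2*(\<beta>*K)*m \<le> 2*(\<epsilon> * vb/4)*m" using beta_K m0 by (intro mult_right_mono) auto
  ultimately have "Ir \<le> (1 - \<epsilon> * vb/4) * n1 + \<gamma> * (\<beta> * nv)" using H n1 by (simp add: algebra_simps)
  also have "\<dots> \<le> \<alpha> * n1 + \<alpha> * (\<beta> * nv)"
    apply (intro add_mono mult_right_mono)
    using n1 m0 nv0 beta_pos by (auto simp: \<alpha>_def)
  finally show ?thesis by (simp add: algebra_simps)
next
  case False
  then have nvb: "n1 \<le> 4 * nv / R" using n1 Rpos by (simp add: field_simps)
  have c0: "0 \<le> c" using c ar br by simp
  have "0 \<le> 2*\<epsilon>*c * vb" using epos vb_pos c0 by simp
  then have H2: "Ir \<le> n1 + (\<beta>*K)*n1 + \<beta>*\<gamma> * nv" using H by (simp add: algebra_simps)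
  have "(\<beta>*K)*n1 \<le> (\<beta>*K)*(4 * nv/R)" using nvb beta_pos Kpos by (intro mult_left_mono) auto
  also have "\<dots> = \<beta> * nv * (4*K/R)" by (simp add: algebra_simps)
  also have "\<dots> \<le> \<beta> * nv * ((1-\<gamma>)/2)" using K_R beta_pos nv0 by (intro mult_left_mono) auto
  finally have X: "\<beta>*K*n1 \<le> \<beta> * nv * ((1-\<gamma>)/2)" by (simp add: algebra_simps)
  have "\<beta>*\<gamma>0 * nv = \<beta>*\<gamma> * nv + \<beta> * nv * ((1-\<gamma>)/2)" by (simp add: \<gamma>0_def field_simps)
  then have "Ir \<le> n1 + \<beta>*\<gamma>0 * nv" using H2 X by linarith
  also have "\<dots> \<le> (1 - \<delta>) * (n1 + \<beta> * nv)"
  proof -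
    have "\<delta> * n1 \<le> \<delta> * (4 * nv / R)" using nvb delta_pos by (intro mult_left_mono) auto
    also have "\<dots> = nv * (\<delta> * (4 / R + \<beta>)) - \<delta> * \<beta> * nv" by (simp add: algebra_simps)
    also have "\<dots> = nv * (\<beta> * (1 - \<gamma>0)) - \<delta> * \<beta> * nv" by (simp add: delta_eq)
    finally show ?thesis by (simp add: algebra_simps)
  qed
  also have "\<dots> \<le> \<alpha> * (n1 + \<beta> * nv)"
    using n1 m0 nv0 beta_pos by (intro mult_right_mono) (auto simp: \<alpha>_def)
  finally show ?thesis .
qed

end

lemma enn_lin: "0 \<le> a \<Longrightarrow> 0 \<le> b \<Longrightarrow> 0 \<le> x \<Longrightarrow> 0 \<le> y \<Longrightarrow>
  ennreal a * ennreal x + ennreal b * ennreal y = ennreal (a*x + b*y)"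
  by (subst ennreal_plus) (auto simp: ennreal_mult)

lemma enn_mul: "0 \<le> a \<Longrightarrow> 0 \<le> x \<Longrightarrow> ennreal a * ennreal x = ennreal (a*x)"
  by (simp add: ennreal_mult)

context harris begin

lemma Lp_mass: assumes [measurable]: "h \<in> borel_measurable lebesgue" and hnn: "\<And>x. 0 \<le> h x"
  shows "(\<integral>\<^sup>+y. Lp h y \<partial>lebesgue) = (\<integral>\<^sup>+x. ennreal (h x) \<partial>lebesgue)"
  using Lp_tonelli[of h "\<lambda>_. 1"] hnn by (simp add: kmass)

lemma harris_step:
  assumes gf: "good f" and z: "integral\<^sup>L lebesgue f = 0"
  shows "good (transfer \<kappa> f)" "integral\<^sup>L lebesgue (transfer \<kappa> f) = 0"
    "Tn (transfer \<kappa> f) \<le> ennreal \<alpha> * Tn f"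
proof -
  have fm[measurable]: "f \<in> borel_measurable lebesgue" using gf good_def by auto
  define P where "P = Lp (fp f)"
  define Q where "Q = Lp (fn f)"
  have Pm[measurable]: "P \<in> borel_measurable lebesgue" "Q \<in> borel_measurable lebesgue"
    unfolding P_def Q_def by measurable
  have Pfin: "\<And>y. P y < \<infinity>" "\<And>y. Q y < \<infinity>" unfolding P_def Q_def using good_Lp_fin[OF gf] by auto
  define g where "g = transfer \<kappa> f"
  have g_eq: "g = (\<lambda>y. enn2real (P y) - enn2real (Q y))"
    unfolding g_def P_def Q_def using transfer_split[OF gf] by auto
  have gm[measurable]: "g \<in> borel_measurable lebesgue" unfolding g_eq by measurable
  define Mp where "Mp = (\<integral>\<^sup>+x. ennreal (fp f x) \<partial>lebesgue)"
  define Mn where "Mn = (\<integral>\<^sup>+x. ennreal (fn f x) \<partial>lebesgue)"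
  have N1eq: "N1 f = Mp + Mn" unfolding Mp_def Mn_def using N1_split[OF fm] .
  have Mfin: "Mp < \<infinity>" "Mn < \<infinity>" using good_N1[OF gf] N1eq by (auto simp: top_unique)
  have "0 = enn2real Mp - enn2real Mn"
    using integral_fpn[OF good_integrable[OF gf]] z unfolding Mp_def Mn_def by simp
  define m where "m = enn2real Mp"
  have m0: "0 \<le> m" unfolding m_def by simp
  have e: "enn2real Mn = m" using \<open>0 = _\<close> m_def by simp
  have Mp_eq: "Mp = ennreal m" "Mn = ennreal m"
    using Mfin ennreal_enn2real[of Mp] ennreal_enn2real[of Mn] e unfolding m_def by auto
  define n1 where "n1 = 2 * m"
  have N1f: "N1 f = ennreal n1" unfolding n1_def N1eq Mp_eq using m0 by (simp add: ennreal_plus[symmetric] del: ennreal_plus)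
  define nv where "nv = enn2real (NV f)"
  have nv0: "0 \<le> nv" unfolding nv_def by simp
  have NVf: "NV f = ennreal nv" using gf unfolding good_def nv_def by simp
  have Tnf: "Tn f = ennreal (n1 + \<beta> * nv)"
    unfolding Tn_def N1f NVf using beta_pos nv0 m0 n1_def by (simp add: ennreal_mult ennreal_plus)
  define a where "a = (\<integral>\<^sup>+x. ennreal (if Vw x \<le> R then fp f x else 0) \<partial>lebesgue)"
  define b where "b = (\<integral>\<^sup>+x. ennreal (if Vw x \<le> R then fn f x else 0) \<partial>lebesgue)"
  have a_le: "a \<le> Mp" "b \<le> Mn" unfolding a_def b_def Mp_def Mn_def
    by (auto intro!: nn_integral_mono ennreal_leI simp: fp_nn fn_nn)
  define ar where "ar = enn2real a"
  define br where "br = enn2real b"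
  have a_eq: "a = ennreal ar" "b = ennreal br" using a_le Mfin unfolding ar_def br_def
    by (auto simp: top_unique le_less_trans)
  have ar0: "0 \<le> ar" "0 \<le> br" unfolding ar_def br_def by auto
  \<comment> \<open>Markov\<close>
  have markov: "m \<le> ar + nv / R" if hh: "\<And>x. 0 \<le> h x" "\<And>x. h x \<le> \<bar>f x\<bar>"
    and hm[measurable]: "h \<in> borel_measurable lebesgue"
    and hM: "(\<integral>\<^sup>+x. ennreal (h x) \<partial>lebesgue) = ennreal m"
    and ha: "(\<integral>\<^sup>+x. ennreal (if Vw x \<le> R then h x else 0) \<partial>lebesgue) = ennreal ar" and ar0: "0 \<le> ar" for h ar
  proof -
    have "ennreal m = (\<integral>\<^sup>+x. ennreal (if Vw x \<le> R then h x else 0) + ennreal (if Vw x \<le> R then 0 else h x) \<partial>lebesgue)"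
      unfolding hM[symmetric] by (intro nn_integral_cong) auto
    also have "\<dots> = ennreal ar + (\<integral>\<^sup>+x. ennreal (if Vw x \<le> R then 0 else h x) \<partial>lebesgue)"
      by (subst nn_integral_add) (auto simp: ha)
    also have "(\<integral>\<^sup>+x. ennreal (if Vw x \<le> R then 0 else h x) \<partial>lebesgue) \<le> (\<integral>\<^sup>+x. ennreal (Vw x * \<bar>f x\<bar>) * ennreal (1 / R) \<partial>lebesgue)"
    proof (rule nn_integral_mono)
      fix x :: "real^'d"
      have "(if Vw x \<le> R then 0 else h x) \<le> Vw x * \<bar>f x\<bar> * (1 / R)"
      proof (cases "Vw x \<le> R")
        case False
        then have "h x * R \<le> \<bar>f x\<bar> * Vw x" using hh[of x] Rpos
          by (intro mult_mono) auto
        then show ?thesis using False Rpos by (simp add: field_simps)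
      qed (use Rpos Vw_ge1[of x] in auto)
      note H = ennreal_leI[OF this]
      have "ennreal (Vw x * \<bar>f x\<bar>) * ennreal (1 / R) = ennreal (Vw x * \<bar>f x\<bar> * (1 / R))"
        using Rpos by (intro ennreal_mult''[symmetric]) simp
      then show "ennreal (if Vw x \<le> R then 0 else h x) \<le> ennreal (Vw x * \<bar>f x\<bar>) * ennreal (1 / R)"
        using H by simp
    qed
    also have "\<dots> = ennreal (nv / R)"
      by (subst nn_integral_multc) (auto simp: NV_def[symmetric] NVf ennreal_mult'[OF nv0, symmetric] divide_inverse simp del: ennreal_mult'')
    finally have "ennreal m \<le> ennreal (ar + nv / R)" using nv0 Rpos hh ar0
      by (simp add: ennreal_plus[symmetric] add_mono del: ennreal_plus)
    then show ?thesis using nv0 Rpos ar0 by (subst (asm) ennreal_le_iff) (auto intro: add_nonneg_nonneg)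
  qed
  have ma: "m \<le> ar + nv / R"
    by (rule markov[of "fp f"]) (auto simp: fp_nn fp_le Mp_eq(1)[symmetric] Mp_def a_eq(1)[symmetric] a_def ar0)
  have mb: "m \<le> br + nv / R"
    by (rule markov[of "fn f"]) (auto simp: fn_nn fn_le Mp_eq(2)[symmetric] Mn_def a_eq(2)[symmetric] b_def ar0)
  have arm: "ar \<le> m" using a_le(1) unfolding a_eq Mp_eq by (simp add: m0)
  define nu where "nu y = (if norm y \<le> 1 then 1 else (0::real))" for y :: "real^'d"
  have minA: "\<epsilon> * nu y * ar \<le> enn2real (Lp h y)"
    if hh: "\<And>x. 0 \<le> h x" and hm[measurable]: "h \<in> borel_measurable lebesgue"
    and ha: "(\<integral>\<^sup>+x. ennreal (if Vw x \<le> R then h x else 0) \<partial>lebesgue) = ennreal ar"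
    and fin: "Lp h y < \<infinity>" and ar0: "0 \<le> ar" for h ar y
  proof -
    have en: "0 \<le> \<epsilon> * nu y" using epos by (simp add: nu_def)
    have "ennreal (\<epsilon> * nu y * ar) = ennreal (\<epsilon> * nu y) * (\<integral>\<^sup>+x. ennreal (if Vw x \<le> R then h x else 0) \<partial>lebesgue)"
      using en ar0 by (simp add: ha ennreal_mult)
    also have "\<dots> = (\<integral>\<^sup>+x. ennreal (\<epsilon> * nu y * (if Vw x \<le> R then h x else 0)) \<partial>lebesgue)"
      using en hh by (subst nn_integral_cmult[symmetric]) (auto simp: ennreal_mult)
    also have "\<dots> \<le> Lp h y" unfolding Lp_def
    proof (rule nn_integral_mono)
      fix x :: "real^'d"
      have "\<epsilon> * nu y * (if Vw x \<le> R then h x else 0) \<le> \<kappa> x y * h x"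
        using minor[of x y] hh[of x] knn[of x y] epos by (auto simp: nu_def intro!: mult_right_mono)
      then show "ennreal (\<epsilon> * nu y * (if Vw x \<le> R then h x else 0)) \<le> ennreal (\<kappa> x y * h x)"
        by (rule ennreal_leI)
    qed
    finally have X: "ennreal (\<epsilon> * nu y * ar) \<le> Lp h y" .
    have "enn2real (ennreal (\<epsilon> * nu y * ar)) \<le> enn2real (Lp h y)"
      by (rule enn2real_mono[OF X]) (use fin in simp)
    then show ?thesis using en ar0 by simp
  qed
  have PA: "\<And>y. \<epsilon> * nu y * ar \<le> enn2real (P y)"
    unfolding P_def by (rule minA) (auto simp: fp_nn a_eq[symmetric] a_def good_Lp_fin[OF gf, unfolded infinity_ennreal_def] ar0)
  have QA: "\<And>y. \<epsilon> * nu y * br \<le> enn2real (Q y)"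
    unfolding Q_def by (rule minA) (auto simp: fn_nn a_eq[symmetric] b_def good_Lp_fin[OF gf, unfolded infinity_ennreal_def] ar0)
  define w where "w y = 1 + \<beta> * Vw y" for y :: "real^'d"
  have w0: "0 \<le> w y" for y using beta_pos Vw_ge1[of y] unfolding w_def
    by (smt (verit) mult_nonneg_nonneg)
  have wm[measurable]: "w \<in> borel_measurable lebesgue" unfolding w_def by measurable
  define c where "c = min ar br"
  have c0: "0 \<le> c" using ar0 c_def by simp
  have num[measurable]: "nu \<in> borel_measurable lebesgue"
  proof -
    have "(\<lambda>y::real^'d. norm y) \<in> borel_measurable lebesgue"
      by (rule measurable_completion) (simp, measurable)
    then show ?thesis unfolding nu_def by measurable
  qed
  have nu0: "\<And>y. 0 \<le> nu y" by (simp add: nu_def)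
  have B: "ennreal (w y * \<bar>g y\<bar>) + ennreal (2 * \<epsilon> * c) * ennreal (w y * nu y) \<le> ennreal (w y) * P y + ennreal (w y) * Q y" for y
  proof -
    define u where "u = enn2real (P y)"
    define v where "v = enn2real (Q y)"
    have en: "0 \<le> \<epsilon> * nu y" using epos nu0[of y] by simp
    have "\<epsilon> * nu y * c \<le> \<epsilon> * nu y * ar" by (rule mult_left_mono[OF _ en]) (simp add: c_def)
    then have cu: "\<epsilon> * nu y * c \<le> u" using PA[of y] unfolding u_def by linarith
    have "\<epsilon> * nu y * c \<le> \<epsilon> * nu y * br" by (rule mult_left_mono[OF _ en]) (simp add: c_def)
    then have cv: "\<epsilon> * nu y * c \<le> v" using QA[of y] unfolding v_def by linarith
    have "\<bar>u - v\<bar> + 2 * (\<epsilon> * nu y * c) \<le> u + v"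
      by (rule absdiff[OF cu cv]) (use epos nu0[of y] c0 in simp)
    then have "w y * (\<bar>u - v\<bar> + 2 * (\<epsilon> * nu y * c)) \<le> w y * (u + v)"
      by (rule mult_left_mono[OF _ w0[of y]])
    then have r: "w y * \<bar>g y\<bar> + 2 * \<epsilon> * c * (w y * nu y) \<le> w y * u + w y * v"
      unfolding g_eq u_def v_def by (simp add: algebra_simps)
    have e1: "0 \<le> w y * \<bar>g y\<bar>" "0 \<le> 2 * \<epsilon> * c * (w y * nu y)" "0 \<le> w y * u" "0 \<le> w y * v"
      using w0[of y] epos c0 nu0[of y] unfolding u_def v_def by auto
    have "ennreal (w y * \<bar>g y\<bar>) + ennreal (2 * \<epsilon> * c) * ennreal (w y * nu y)
        = ennreal (w y * \<bar>g y\<bar> + 2 * \<epsilon> * c * (w y * nu y))"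
    proof -
      have m1: "ennreal (2 * \<epsilon> * c) * ennreal (w y * nu y) = ennreal (2 * \<epsilon> * c * (w y * nu y))"
        using epos c0 w0[of y] nu0[of y] by (intro ennreal_mult[symmetric]) auto
      show ?thesis unfolding m1 using e1 by (intro ennreal_plus[symmetric])
    qed
    also have "\<dots> \<le> ennreal (w y * u + w y * v)" using r by (rule ennreal_leI)
    also have "\<dots> = ennreal (w y) * P y + ennreal (w y) * Q y"
      using e1 w0[of y] Pfin[of y] unfolding u_def v_def
      by (simp add: ennreal_plus ennreal_mult)
    finally show ?thesis .
  qed
  define I where "I = (\<integral>\<^sup>+y. ennreal (w y * \<bar>g y\<bar>) \<partial>lebesgue)"
  have C: "I + ennreal (2 * \<epsilon> * c) * (\<integral>\<^sup>+y. ennreal (w y * nu y) \<partial>lebesgue)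
      \<le> (\<integral>\<^sup>+y. ennreal (w y) * P y \<partial>lebesgue) + (\<integral>\<^sup>+y. ennreal (w y) * Q y \<partial>lebesgue)"
  proof -
    have "I + ennreal (2 * \<epsilon> * c) * (\<integral>\<^sup>+y. ennreal (w y * nu y) \<partial>lebesgue)
       = (\<integral>\<^sup>+y. ennreal (w y * \<bar>g y\<bar>) + ennreal (2 * \<epsilon> * c) * ennreal (w y * nu y) \<partial>lebesgue)"
      unfolding I_def by (subst nn_integral_add) (auto simp: nn_integral_cmult)
    also have "\<dots> \<le> (\<integral>\<^sup>+y. ennreal (w y) * P y + ennreal (w y) * Q y \<partial>lebesgue)"
      by (intro nn_integral_mono B)
    also have "\<dots> = (\<integral>\<^sup>+y. ennreal (w y) * P y \<partial>lebesgue) + (\<integral>\<^sup>+y. ennreal (w y) * Q y \<partial>lebesgue)"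
      by (subst nn_integral_add) auto
    finally show ?thesis .
  qed
  define E where "E x = 1 + \<beta> * (\<gamma> * Vw x + K)" for x :: "real^'d"
  have D1: "(\<integral>\<^sup>+y. ennreal (w y) * Lp h y \<partial>lebesgue) \<le> (\<integral>\<^sup>+x. ennreal (h x) * ennreal (E x) \<partial>lebesgue)"
    if hm[measurable]: "h \<in> borel_measurable lebesgue" and hh: "\<And>x. 0 \<le> h x" for h
    using w0 hh by (subst Lp_tonelli) (auto intro!: nn_integral_mono mult_left_mono simp: w_def E_def w_kern)
  have E0: "0 \<le> E x" for x using beta_pos gam Kpos Vw_ge1[of x] unfolding E_def
    by (smt (verit) mult_nonneg_nonneg)
  have D: "(\<integral>\<^sup>+y. ennreal (w y) * P y \<partial>lebesgue) + (\<integral>\<^sup>+y. ennreal (w y) * Q y \<partial>lebesgue)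
      \<le> ennreal ((1 + \<beta> * K) * n1 + \<beta> * \<gamma> * nv)"
  proof -
    have "(\<integral>\<^sup>+y. ennreal (w y) * P y \<partial>lebesgue) + (\<integral>\<^sup>+y. ennreal (w y) * Q y \<partial>lebesgue)
       \<le> (\<integral>\<^sup>+x. ennreal (fp f x) * ennreal (E x) \<partial>lebesgue) + (\<integral>\<^sup>+x. ennreal (fn f x) * ennreal (E x) \<partial>lebesgue)"
      unfolding P_def Q_def by (intro add_mono D1) (auto simp: fp_nn fn_nn)
    also have "\<dots> = (\<integral>\<^sup>+x. ennreal (fp f x) * ennreal (E x) + ennreal (fn f x) * ennreal (E x) \<partial>lebesgue)"
      unfolding E_def by (subst nn_integral_add) auto
    also have "\<dots> = (\<integral>\<^sup>+x. ennreal (1 + \<beta> * K) * ennreal \<bar>f x\<bar> + ennreal (\<beta> * \<gamma>) * ennreal (Vw x * \<bar>f x\<bar>) \<partial>lebesgue)"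
    proof (rule nn_integral_cong)
      fix x :: "real^'d"
      have "fp f x * E x + fn f x * E x = (1 + \<beta> * K) * \<bar>f x\<bar> + (\<beta> * \<gamma>) * (Vw x * \<bar>f x\<bar>)"
        unfolding E_def fpn_abs[of f x] by (simp add: algebra_simps)
      moreover have "0 \<le> fp f x * E x" "0 \<le> fn f x * E x" "0 \<le> (1 + \<beta> * K) * \<bar>f x\<bar>" "0 \<le> (\<beta> * \<gamma>) * (Vw x * \<bar>f x\<bar>)"
        using fp_nn[of f x] fn_nn[of f x] E0[of x] beta_pos Kpos gam Vw_ge1[of x] by auto
      ultimately show "ennreal (fp f x) * ennreal (E x) + ennreal (fn f x) * ennreal (E x)
          = ennreal (1 + \<beta> * K) * ennreal \<bar>f x\<bar> + ennreal (\<beta> * \<gamma>) * ennreal (Vw x * \<bar>f x\<bar>)"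
      proof -
        assume eq: "fp f x * E x + fn f x * E x = (1 + \<beta> * K) * \<bar>f x\<bar> + (\<beta> * \<gamma>) * (Vw x * \<bar>f x\<bar>)"
          and n: "0 \<le> fp f x * E x" "0 \<le> fn f x * E x" "0 \<le> (1 + \<beta> * K) * \<bar>f x\<bar>" "0 \<le> (\<beta> * \<gamma>) * (Vw x * \<bar>f x\<bar>)"
        have n2: "0 \<le> 1 + \<beta> * K" "0 \<le> \<beta> * \<gamma>" "0 \<le> Vw x * \<bar>f x\<bar>" using beta_pos Kpos gam Vw_ge1[of x] by auto
        have "ennreal (fp f x) * ennreal (E x) + ennreal (fn f x) * ennreal (E x) = ennreal (fp f x * E x + fn f x * E x)"
          by (subst ennreal_plus[OF n(1,2)]) (simp add: ennreal_mult[OF fp_nn E0] ennreal_mult[OF fn_nn E0])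
        also have "\<dots> = ennreal ((1 + \<beta> * K) * \<bar>f x\<bar> + (\<beta> * \<gamma>) * (Vw x * \<bar>f x\<bar>))" by (simp only: eq)
        also have "\<dots> = ennreal (1 + \<beta> * K) * ennreal \<bar>f x\<bar> + ennreal (\<beta> * \<gamma>) * ennreal (Vw x * \<bar>f x\<bar>)"
          by (subst ennreal_plus[OF n(3,4)]) (simp add: ennreal_mult[OF n2(1) abs_ge_zero] ennreal_mult[OF n2(2,3)] del: ennreal_plus)
        finally show ?thesis .
      qed
    qed
    also have "\<dots> = ennreal (1 + \<beta> * K) * N1 f + ennreal (\<beta> * \<gamma>) * NV f"
      unfolding N1_def NV_def by (subst nn_integral_add) (auto simp: nn_integral_cmult)
    also have "\<dots> = ennreal ((1 + \<beta> * K) * n1 + \<beta> * \<gamma> * nv)"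
      unfolding N1f NVf using beta_pos Kpos gam nv0 m0 n1_def
      by (intro enn_lin) auto
    finally show ?thesis .
  qed
  have Eb: "ennreal vb \<le> (\<integral>\<^sup>+y. ennreal (w y * nu y) \<partial>lebesgue)"
    using w_ball unfolding w_def nu_def .
  have eqm: "ennreal (2 * \<epsilon> * c) * ennreal vb = ennreal (2 * \<epsilon> * c * vb)"
    by (rule enn_mul) (use epos c0 vb_pos in auto)
  have "I + ennreal (2 * \<epsilon> * c) * ennreal vb \<le> I + ennreal (2 * \<epsilon> * c) * (\<integral>\<^sup>+y. ennreal (w y * nu y) \<partial>lebesgue)"
    by (intro add_mono mult_left_mono Eb) auto
  also have "\<dots> \<le> ennreal ((1 + \<beta> * K) * n1 + \<beta> * \<gamma> * nv)" using C D by (rule order.trans)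
  finally have CD: "I + ennreal (2 * \<epsilon> * c * vb) \<le> ennreal ((1 + \<beta> * K) * n1 + \<beta> * \<gamma> * nv)"
    unfolding eqm .
  have "I \<le> I + ennreal (2 * \<epsilon> * c * vb)" by simp
  then have "I \<le> ennreal ((1 + \<beta> * K) * n1 + \<beta> * \<gamma> * nv)" using CD by (rule order.trans)
  then have Ifin: "I < \<infinity>" using ennreal_less_top le_less_trans by (metis infinity_ennreal_def)
  define Ir where "Ir = enn2real I"
  have I_eq: "I = ennreal Ir" using Ifin unfolding Ir_def by simp
  have "ennreal (Ir + 2 * \<epsilon> * c * vb) \<le> ennreal ((1 + \<beta> * K) * n1 + \<beta> * \<gamma> * nv)"
    using CD epos c0 vb_pos unfolding I_eq
    by (subst ennreal_plus) (auto simp: Ir_def)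
  then have real: "Ir + 2 * \<epsilon> * c * vb \<le> (1 + \<beta> * K) * n1 + \<beta> * \<gamma> * nv"
    using beta_pos Kpos gam nv0 m0 n1_def by (subst (asm) ennreal_le_iff) auto
  have fin_ineq: "Ir \<le> \<alpha> * (n1 + \<beta> * nv)"
    by (rule harris_arith[OF real n1_def ma mb c_def ar0 m0 nv0])
  have Tg: "Tn g = I"
  proof -
    have "Tn g = (\<integral>\<^sup>+y. ennreal \<bar>g y\<bar> + ennreal \<beta> * ennreal (Vw y * \<bar>g y\<bar>) \<partial>lebesgue)"
      unfolding Tn_def N1_def NV_def by (subst nn_integral_add) (auto simp: nn_integral_cmult)
    also have "\<dots> = I" unfolding I_def w_def
    proof (rule nn_integral_cong)
      fix y :: "real^'d"
      have "0 \<le> \<beta> * (Vw y * \<bar>g y\<bar>)" using beta_pos Vw_ge1[of y] by simp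
      then show "ennreal \<bar>g y\<bar> + ennreal \<beta> * ennreal (Vw y * \<bar>g y\<bar>) = ennreal ((1 + \<beta> * Vw y) * \<bar>g y\<bar>)"
        using beta_pos Vw_ge1[of y] by (subst enn_mul, simp, simp, subst ennreal_plus[symmetric]) (auto simp: algebra_simps)
    qed
    finally show ?thesis .
  qed
  show "Tn g \<le> ennreal \<alpha> * Tn f"
    unfolding Tg I_eq Tnf using fin_ineq alpha_nn beta_pos nv0 m0 n1_def
    by (subst enn_mul) (auto intro!: ennreal_leI)
  have "ennreal \<beta> * NV g \<le> Tn g" unfolding Tn_def by (rule add_increasing) simp_all
  then have "ennreal \<beta> * NV g \<le> ennreal Ir" unfolding Tg I_eq .
  then have lt: "ennreal \<beta> * NV g < top" using ennreal_less_top[of Ir] by (rule le_less_trans)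
  have "NV g \<noteq> top"
  proof
    assume "NV g = top"
    then have "ennreal \<beta> * NV g = top" using beta_pos by (simp add: ennreal_mult_eq_top_iff)
    then show False using lt by simp
  qed
  then have "NV g < \<infinity>" by (simp add: infinity_ennreal_def less_top)
  then show "good g" unfolding good_def using gm by simp
  have PQint: "integrable lebesgue (\<lambda>y. enn2real (Lp h y)) \<and> integral\<^sup>L lebesgue (\<lambda>y. enn2real (Lp h y)) = m"
    if hm[measurable]: "h \<in> borel_measurable lebesgue" and hh: "\<And>x. 0 \<le> h x"
    and hM: "(\<integral>\<^sup>+x. ennreal (h x) \<partial>lebesgue) = ennreal m" and fin: "\<And>y. Lp h y < \<infinity>" for h
  proof -
    have "(\<integral>\<^sup>+y. ennreal (enn2real (Lp h y)) \<partial>lebesgue) = (\<integral>\<^sup>+y. Lp h y \<partial>lebesgue)"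
    proof (rule nn_integral_cong)
      fix y :: "real^'d"
      have "Lp h y < top" using fin[of y] by (simp add: infinity_ennreal_def)
      then show "ennreal (enn2real (Lp h y)) = Lp h y" by (rule ennreal_enn2real)
    qed
    also have "\<dots> = ennreal m" using Lp_mass[OF hm hh] hM by simp
    finally have eq: "(\<integral>\<^sup>+y. ennreal (enn2real (Lp h y)) \<partial>lebesgue) = ennreal m" .
    have mm: "(\<lambda>y. enn2real (Lp h y)) \<in> borel_measurable lebesgue" by measurable
    have "integrable lebesgue (\<lambda>y. enn2real (Lp h y))"
      by (rule integrableI_nonneg[OF mm]) (simp_all add: eq)
    moreover have "integral\<^sup>L lebesgue (\<lambda>y. enn2real (Lp h y)) = m"
      using integral_eq_nn_integral[OF mm] eq m0 by simp
    ultimately show ?thesis by simp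
  qed
  have hp: "(\<integral>\<^sup>+x. ennreal (fp f x) \<partial>lebesgue) = ennreal m" using Mp_eq(1) unfolding Mp_def .
  have hn: "(\<integral>\<^sup>+x. ennreal (fn f x) \<partial>lebesgue) = ennreal m" using Mp_eq(2) unfolding Mn_def .
  have iP: "integrable lebesgue (\<lambda>y. enn2real (P y))" "integral\<^sup>L lebesgue (\<lambda>y. enn2real (P y)) = m"
    using PQint[of "fp f", OF fp_meas[OF fm] fp_nn hp good_Lp_fin(1)[OF gf]] unfolding P_def by auto
  have iQ: "integrable lebesgue (\<lambda>y. enn2real (Q y))" "integral\<^sup>L lebesgue (\<lambda>y. enn2real (Q y)) = m"
    using PQint[of "fn f", OF fn_meas[OF fm] fn_nn hn good_Lp_fin(2)[OF gf]] unfolding Q_def by auto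
  show "integral\<^sup>L lebesgue g = 0" unfolding g_eq
    using Bochner_Integration.integral_diff[OF iP(1) iQ(1)] iP(2) iQ(2) by simp
qed

end

context harris begin

definition zm :: "(real^'d \<Rightarrow> real) \<Rightarrow> bool" where
  "zm f \<longleftrightarrow> good f \<and> integral\<^sup>L lebesgue f = 0"

abbreviation LL where "LL \<equiv> transfer \<kappa>"

lemma zm_L: "zm f \<Longrightarrow> zm (LL f)"
  unfolding zm_def using harris_step by blast

lemma zm_iter: "zm f \<Longrightarrow> zm ((LL ^^ n) f) \<and> Tn ((LL ^^ n) f) \<le> ennreal (\<alpha> ^ n) * Tn f"
proof (induction n)
  case 0 then show ?case by simp
next
  case (Suc n)
  then have z: "zm ((LL ^^ n) f)" and t: "Tn ((LL ^^ n) f) \<le> ennreal (\<alpha> ^ n) * Tn f" by auto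
  have "Tn ((LL ^^ Suc n) f) \<le> ennreal \<alpha> * Tn ((LL ^^ n) f)"
    using harris_step(3)[of "(LL ^^ n) f"] z unfolding zm_def by simp
  also have "\<dots> \<le> ennreal \<alpha> * (ennreal (\<alpha> ^ n) * Tn f)" by (intro mult_left_mono t) simp
  also have "\<dots> = ennreal (\<alpha> ^ Suc n) * Tn f"
    using alpha_nn by (simp add: ennreal_mult' mult.assoc)
  finally show ?case using zm_L[OF z] by simp
qed

lemma Tn_lower: "ennreal \<beta> * NV f \<le> Tn f" unfolding Tn_def by (rule add_increasing) simp_all

lemma Tn_upper: "Tn f \<le> ennreal (1 + \<beta>) * NV f"
proof -
  have "Tn f \<le> NV f + ennreal \<beta> * NV f" unfolding Tn_def by (intro add_mono N1_le_NV) simp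
  also have "\<dots> = ennreal (1 + \<beta>) * NV f" using beta_pos by (simp add: ennreal_plus distrib_right)
  finally show ?thesis .
qed

definition "Cd = (1 + \<beta>) / \<beta>"

lemma Cd_pos: "0 < Cd" unfolding Cd_def using beta_pos by simp

lemma NV_fin: "good f \<Longrightarrow> NV f = ennreal (enn2real (NV f))"
  unfolding good_def by (simp add: less_top infinity_ennreal_def)

lemma decay: assumes "zm f"
  shows "enn2real (NV ((LL ^^ n) f)) \<le> Cd * \<alpha> ^ n * enn2real (NV f)"
proof -
  have gi: "good ((LL ^^ n) f)" using zm_iter[OF assms] zm_def by auto
  have gf: "good f" using assms zm_def by auto
  define a where "a = enn2real (NV ((LL ^^ n) f))"
  define b where "b = enn2real (NV f)"
  have "ennreal \<beta> * ennreal a = ennreal \<beta> * NV ((LL ^^ n) f)" using NV_fin[OF gi] a_def by simp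
  also have "\<dots> \<le> Tn ((LL ^^ n) f)" by (rule Tn_lower)
  also have "\<dots> \<le> ennreal (\<alpha> ^ n) * Tn f" using zm_iter[OF assms, of n] by simp
  also have "\<dots> \<le> ennreal (\<alpha> ^ n) * (ennreal (1 + \<beta>) * NV f)" by (intro mult_left_mono Tn_upper) simp
  also have "\<dots> = ennreal (\<alpha> ^ n) * (ennreal (1 + \<beta>) * ennreal b)" using NV_fin[OF gf] b_def by simp
  finally have "ennreal \<beta> * ennreal a \<le> ennreal (\<alpha> ^ n) * (ennreal (1 + \<beta>) * ennreal b)" .
  moreover have "ennreal \<beta> * ennreal a = ennreal (\<beta> * a)" using beta_pos a_def by (intro enn_mul) auto
  moreover have "ennreal (1 + \<beta>) * ennreal b = ennreal ((1 + \<beta>) * b)" using beta_pos b_def by (intro enn_mul) auto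
  moreover have "ennreal (\<alpha> ^ n) * ennreal ((1 + \<beta>) * b) = ennreal (\<alpha> ^ n * ((1 + \<beta>) * b))"
    using beta_pos alpha_nn b_def by (intro enn_mul) auto
  ultimately have "ennreal (\<beta> * a) \<le> ennreal (\<alpha> ^ n * ((1 + \<beta>) * b))" by simp
  then have "\<beta> * a \<le> \<alpha> ^ n * ((1 + \<beta>) * b)"
    using beta_pos alpha_nn by (subst (asm) ennreal_le_iff) (auto simp: b_def)
  then show ?thesis using beta_pos unfolding Cd_def a_def[symmetric] b_def[symmetric]
    by (simp add: field_simps)
qed

end

lemma sq2: "(a + b)^2 \<le> 2 * a^2 + 2 * (b::real)^2"
proof -
  have "0 \<le> (a - b)^2" by simp
  moreover have "(a+b)^2 = 2*a^2 + 2*b^2 - (a-b)^2" by (simp add: power2_eq_square algebra_simps)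
  ultimately show ?thesis by linarith
qed

definition Il :: "(real^'d) set \<Rightarrow> (real^'d \<Rightarrow> real) \<Rightarrow> ennreal" where
  "Il D f = (\<integral>\<^sup>+x. ennreal (indicator D x * (f x)\<^sup>2) \<partial>lebesgue)"

lemma L2_eq: "L2_on_norm D f = (if Il D f = \<infinity> then \<infinity> else ennreal (sqrt (enn2real (Il D f))))"
  unfolding L2_on_norm_def Il_def Let_def ..

lemma L2_fin_iff: "L2_on_norm D f < \<infinity> \<longleftrightarrow> Il D f < \<infinity>"
  unfolding L2_eq by (auto simp: less_top infinity_ennreal_def)

lemma L2_cong: "AE x in lebesgue. f x = g x \<Longrightarrow> L2_on_norm D f = L2_on_norm D g"
proof -
  assume "AE x in lebesgue. f x = g x"
  then have "Il D f = Il D g" unfolding Il_def by (intro nn_integral_cong_AE) auto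
  then show ?thesis unfolding L2_eq by simp
qed

lemma NV_cong: "AE x in lebesgue. f x = g x \<Longrightarrow> NV f = NV g"
  unfolding NV_def by (intro nn_integral_cong_AE) auto

lemma L12_NV: "L1_2_norm f = NV f"
  unfolding L1_2_norm_def NV_def Vw_def ..

locale harrisD = harris \<kappa> C0 \<gamma> K \<epsilon> R vb for \<kappa> :: "real^'d \<Rightarrow> real^'d \<Rightarrow> real" and C0 \<gamma> K \<epsilon> R vb +
  fixes D :: "(real^'d) set"
  assumes Dc: "compact D"
begin

definition "muD = measure lebesgue D"

lemma D_sets[measurable]: "D \<in> sets lebesgue"
  using Dc by (simp add: compact_imp_closed borel_closed sets_completionI_sets)

lemma D_emeas: "emeasure lebesgue D = ennreal muD" and muD0: "0 \<le> muD"
proof -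
  have "emeasure lborel D < \<infinity>" using emeasure_bounded_finite[OF compact_imp_bounded[OF Dc]] .
  moreover have "emeasure lebesgue D = emeasure lborel D"
    using Dc by (simp add: compact_imp_closed borel_closed emeasure_completion)
  ultimately show "emeasure lebesgue D = ennreal muD"
    unfolding muD_def measure_def by (simp add: less_top infinity_ennreal_def)
  show "0 \<le> muD" unfolding muD_def by simp
qed

lemma Il_bounded:
  assumes [measurable]: "h \<in> borel_measurable lebesgue" and hb: "\<And>y. \<bar>h y\<bar> \<le> B"
  shows "Il D h \<le> ennreal (B^2 * muD)"
proof -
  have "Il D h \<le> (\<integral>\<^sup>+x. ennreal (B^2) * indicator D x \<partial>lebesgue)"
    unfolding Il_def
  proof (rule nn_integral_mono)
    fix x :: "real^'d"
    have "\<bar>h x\<bar>^2 \<le> B^2" using hb[of x] by (intro power_mono) auto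
    then have "(h x)^2 \<le> B^2" by simp
    then show "ennreal (indicator D x * (h x)\<^sup>2) \<le> ennreal (B^2) * indicator D x"
      by (auto simp: indicator_def intro!: ennreal_leI)
  qed
  also have "\<dots> = ennreal (B^2) * emeasure lebesgue D" by (simp add: nn_integral_cmult_indicator)
  also have "\<dots> = ennreal (B^2 * muD)" using D_emeas muD0 by (simp add: ennreal_mult)
  finally show ?thesis .
qed

lemma L2_bounded:
  assumes [measurable]: "h \<in> borel_measurable lebesgue" and hb: "\<And>y. \<bar>h y\<bar> \<le> B" and B0: "0 \<le> B"
  shows "L2_on_norm D h \<le> ennreal (B * sqrt muD)"
proof -
  have I: "Il D h \<le> ennreal (B^2 * muD)" by (rule Il_bounded) fact+
  have lt: "Il D h < top" using I ennreal_less_top by (rule le_less_trans)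
  then have fin: "Il D h \<noteq> \<infinity>" by (simp add: infinity_ennreal_def)
  have "enn2real (Il D h) \<le> enn2real (ennreal (B^2 * muD))" using I by (rule enn2real_mono) simp
  then have "enn2real (Il D h) \<le> B^2 * muD" using muD0 by simp
  then have "sqrt (enn2real (Il D h)) \<le> sqrt (B^2 * muD)" by simp
  also have "\<dots> = B * sqrt muD" using B0 by (simp add: real_sqrt_mult)
  finally show ?thesis unfolding L2_eq using fin by (simp add: ennreal_leI)
qed

lemma L2_add:
  assumes [measurable]: "f \<in> borel_measurable lebesgue" "h \<in> borel_measurable lebesgue"
    and fin: "L2_on_norm D f < \<infinity>" and hb: "\<And>y. \<bar>h y\<bar> \<le> B" and B0: "0 \<le> B"
  shows "L2_on_norm D (\<lambda>y. f y + h y) \<le> ennreal (sqrt 2) * L2_on_norm D f + ennreal (sqrt 2 * B * sqrt muD)"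
proof -
  have ff: "Il D f < \<infinity>" using fin L2_fin_iff by blast
  define a where "a = enn2real (Il D f)"
  have a0: "0 \<le> a" unfolding a_def by simp
  have Ia: "Il D f = ennreal a" using ff unfolding a_def by (simp add: less_top infinity_ennreal_def)
  have "Il D (\<lambda>y. f y + h y) \<le> (\<integral>\<^sup>+x. ennreal (2 * (indicator D x * (f x)\<^sup>2)) + ennreal (2 * (indicator D x * (h x)\<^sup>2)) \<partial>lebesgue)"
    unfolding Il_def
  proof (rule nn_integral_mono)
    fix x :: "real^'d"
    have "indicator D x * (f x + h x)\<^sup>2 \<le> 2 * (indicator D x * (f x)\<^sup>2) + 2 * (indicator D x * (h x)\<^sup>2)"
      using sq2[of "f x" "h x"] by (auto simp: indicator_def)
    then have "ennreal (indicator D x * (f x + h x)\<^sup>2) \<le> ennreal (2 * (indicator D x * (f x)\<^sup>2) + 2 * (indicator D x * (h x)\<^sup>2))"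
      by (rule ennreal_leI)
    also have "\<dots> = ennreal (2 * (indicator D x * (f x)\<^sup>2)) + ennreal (2 * (indicator D x * (h x)\<^sup>2))"
      by (rule ennreal_plus) (auto simp: indicator_def)
    finally show "ennreal (indicator D x * (f x + h x)\<^sup>2) \<le> ennreal (2 * (indicator D x * (f x)\<^sup>2)) + ennreal (2 * (indicator D x * (h x)\<^sup>2))" .
  qed
  also have "\<dots> = ennreal 2 * Il D f + ennreal 2 * Il D h"
    unfolding Il_def by (subst nn_integral_add) (auto simp: ennreal_mult nn_integral_cmult)
  also have "\<dots> \<le> ennreal 2 * ennreal a + ennreal 2 * ennreal (B^2 * muD)"
    unfolding Ia by (intro add_mono mult_left_mono Il_bounded hb) auto
  also have "\<dots> = ennreal (2 * a + 2 * (B^2 * muD))"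
    using a0 muD0 by (intro enn_lin) auto
  finally have I: "Il D (\<lambda>y. f y + h y) \<le> ennreal (2 * a + 2 * (B^2 * muD))" .
  have lt: "Il D (\<lambda>y. f y + h y) < top" using I ennreal_less_top by (rule le_less_trans)
  then have fin2: "Il D (\<lambda>y. f y + h y) \<noteq> \<infinity>" by (simp add: infinity_ennreal_def)
  have "enn2real (Il D (\<lambda>y. f y + h y)) \<le> enn2real (ennreal (2 * a + 2 * (B^2 * muD)))" using I by (rule enn2real_mono) simp
  moreover have "enn2real (ennreal (2 * a + 2 * (B^2 * muD))) = 2 * a + 2 * (B^2 * muD)"
    using a0 muD0 by (intro enn2real_ennreal) auto
  ultimately have "enn2real (Il D (\<lambda>y. f y + h y)) \<le> 2 * a + 2 * (B^2 * muD)" by simp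
  then have "sqrt (enn2real (Il D (\<lambda>y. f y + h y))) \<le> sqrt (2 * a + 2 * (B^2 * muD))" by simp
  also have "\<dots> \<le> sqrt (2 * a) + sqrt (2 * (B^2 * muD))" using a0 muD0 by (intro sqrt_add_le_add_sqrt) auto
  also have "\<dots> = sqrt 2 * sqrt a + sqrt 2 * B * sqrt muD" using B0 by (simp add: real_sqrt_mult)
  finally have r: "sqrt (enn2real (Il D (\<lambda>y. f y + h y))) \<le> sqrt 2 * sqrt a + sqrt 2 * B * sqrt muD" .
  have "L2_on_norm D (\<lambda>y. f y + h y) \<le> ennreal (sqrt 2 * sqrt a + sqrt 2 * B * sqrt muD)"
    unfolding L2_eq using fin2 r by (simp add: ennreal_leI)
  also have "\<dots> = ennreal (sqrt 2) * L2_on_norm D f + ennreal (sqrt 2 * B * sqrt muD)"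
  proof -
    have "L2_on_norm D f = ennreal (sqrt a)" unfolding L2_eq a_def using ff by (simp add: infinity_ennreal_def)
    moreover have "ennreal (sqrt 2 * sqrt a + sqrt 2 * B * sqrt muD) = ennreal (sqrt 2 * sqrt a) + ennreal (sqrt 2 * B * sqrt muD)"
      using a0 B0 muD0 by (intro ennreal_plus) auto
    moreover have "ennreal (sqrt 2 * sqrt a) = ennreal (sqrt 2) * ennreal (sqrt a)" using a0 by (intro ennreal_mult) auto
    ultimately show ?thesis by simp
  qed
  finally show ?thesis .
qed

end

context harris begin

lemma L_bound: assumes "good g" shows "\<bar>LL g y\<bar> \<le> C0 * enn2real (NV g)"
proof -
  have gm[measurable]: "g \<in> borel_measurable lebesgue" using assms good_def by auto
  have ig: "integrable lebesgue g" by (rule good_integrable[OF assms])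
  have "\<bar>LL g y\<bar> \<le> (\<integral>x. C0 * \<bar>g x\<bar> \<partial>lebesgue)"
    unfolding transfer_def
    by (rule integral_abs_bound_integral[OF good_int_k[OF assms]])
       (use ig knn kbd in \<open>auto simp: abs_mult intro!: mult_right_mono\<close>)
  also have "\<dots> = C0 * (\<integral>x. \<bar>g x\<bar> \<partial>lebesgue)" by simp
  also have "(\<integral>x. \<bar>g x\<bar> \<partial>lebesgue) = enn2real (N1 g)"
    unfolding N1_def by (subst integral_eq_nn_integral) auto
  also have "enn2real (N1 g) \<le> enn2real (NV g)"
    using N1_le_NV assms unfolding good_def by (intro enn2real_mono) (auto simp: infinity_ennreal_def)
  finally show ?thesis using C0_nn by (simp add: mult_left_mono)
qed

lemma L_bound_iter: assumes "zm f"
  shows "\<bar>(LL ^^ Suc n) f y\<bar> \<le> C0 * (Cd * \<alpha> ^ n * enn2real (NV f))"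
proof -
  have g: "good ((LL ^^ n) f)" using zm_iter[OF assms] zm_def by auto
  have "\<bar>(LL ^^ Suc n) f y\<bar> \<le> C0 * enn2real (NV ((LL ^^ n) f))" using L_bound[OF g] by simp
  also have "\<dots> \<le> C0 * (Cd * \<alpha> ^ n * enn2real (NV f))" using decay[OF assms] C0_nn by (intro mult_left_mono) auto
  finally show ?thesis .
qed

lemma NV_iter: assumes "zm f" shows "NV ((LL ^^ n) f) \<le> ennreal (Cd * \<alpha> ^ n * enn2real (NV f))"
proof -
  have g: "good ((LL ^^ n) f)" using zm_iter[OF assms] zm_def by auto
  show ?thesis using NV_fin[OF g] decay[OF assms, of n] by (metis ennreal_leI)
qed

end

context harrisD begin

lemma VB_iff: "f \<in> V_B D \<longleftrightarrow> f \<in> borel_measurable lebesgue \<and> NV f < \<infinity> \<and> L2_on_norm D f < \<infinity> \<and> integral\<^sup>L lebesgue f = 0"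
  unfolding V_B_def strong_space_def strong_norm_def L12_NV by (auto simp: less_top infinity_ennreal_def)

lemma VB_zm: "f \<in> V_B D \<Longrightarrow> zm f"
  unfolding VB_iff zm_def good_def by auto

lemma VB_L: assumes "f \<in> V_B D" shows "LL f \<in> V_B D"
proof -
  have z: "zm (LL f)" using zm_L[OF VB_zm[OF assms]] .
  have g: "good f" using VB_zm[OF assms] zm_def by auto
  have m[measurable]: "LL f \<in> borel_measurable lebesgue" using z unfolding zm_def good_def by auto
  have "L2_on_norm D (LL f) \<le> ennreal (C0 * enn2real (NV f) * sqrt muD)"
    by (rule L2_bounded[OF m L_bound[OF g]]) (use C0_nn in auto)
  then have "L2_on_norm D (LL f) < \<infinity>" by (metis ennreal_less_top infinity_ennreal_def le_less_trans)
  then show ?thesis using z unfolding VB_iff zm_def good_def by auto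
qed

lemma part1: assumes "f \<in> V_B D" shows "(\<lambda>n. strong_norm D ((LL ^^ n) f)) \<longlonglongrightarrow> 0"
proof (rule LIMSEQ_imp_Suc)
  have z: "zm f" using VB_zm[OF assms] .
  define c where "c = Cd * \<alpha> * enn2real (NV f) + C0 * Cd * enn2real (NV f) * sqrt muD"
  have bd: "strong_norm D ((LL ^^ Suc n) f) \<le> ennreal (c * \<alpha> ^ n)" for n
  proof -
    have m[measurable]: "(LL ^^ Suc n) f \<in> borel_measurable lebesgue"
      using zm_iter[OF z, of "Suc n"] unfolding zm_def good_def by auto
    have "L2_on_norm D ((LL ^^ Suc n) f) \<le> ennreal (C0 * (Cd * \<alpha> ^ n * enn2real (NV f)) * sqrt muD)"
      by (rule L2_bounded[OF m L_bound_iter[OF z]]) (use C0_nn Cd_pos alpha_nn in auto)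
    moreover have "NV ((LL ^^ Suc n) f) \<le> ennreal (Cd * \<alpha> ^ Suc n * enn2real (NV f))" by (rule NV_iter[OF z])
    ultimately have "strong_norm D ((LL ^^ Suc n) f) \<le> ennreal (Cd * \<alpha> ^ Suc n * enn2real (NV f)) + ennreal (C0 * (Cd * \<alpha> ^ n * enn2real (NV f)) * sqrt muD)"
      unfolding strong_norm_def L12_NV by (simp add: add_mono)
    also have "\<dots> = ennreal (Cd * \<alpha> ^ Suc n * enn2real (NV f) + C0 * (Cd * \<alpha> ^ n * enn2real (NV f)) * sqrt muD)"
      using C0_nn Cd_pos alpha_nn muD0 by (intro ennreal_plus[symmetric]) auto
    also have "Cd * \<alpha> ^ Suc n * enn2real (NV f) + C0 * (Cd * \<alpha> ^ n * enn2real (NV f)) * sqrt muD = c * \<alpha> ^ n"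
      unfolding c_def by (simp add: algebra_simps)
    finally show ?thesis .
  qed
  have "(\<lambda>n. ennreal (c * \<alpha> ^ n)) \<longlonglongrightarrow> ennreal (c * 0)"
    using alpha_nn alpha_lt1 by (intro tendsto_ennrealI tendsto_mult tendsto_const LIMSEQ_power_zero) auto
  then have lim: "(\<lambda>n. ennreal (c * \<alpha> ^ n)) \<longlonglongrightarrow> 0" by simp
  show "(\<lambda>n. strong_norm D ((LL ^^ Suc n) f)) \<longlonglongrightarrow> 0"
    by (rule tendsto_sandwich[OF _ _ tendsto_const lim]) (auto intro!: always_eventually bd simp del: funpow.simps)
qed

end

context harris begin

lemma good_diff: fixes f1 f2 :: "real^'d \<Rightarrow> real" assumes "good f1" "good f2" shows "good (\<lambda>y. f1 y - f2 y)"
proof -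
  have [measurable]: "f1 \<in> borel_measurable lebesgue" "f2 \<in> borel_measurable lebesgue" using assms good_def by auto
  have "NV (\<lambda>y. f1 y - f2 y) \<le> (\<integral>\<^sup>+x. ennreal (Vw x * \<bar>f1 x\<bar>) + ennreal (Vw x * \<bar>f2 x\<bar>) \<partial>lebesgue)"
    unfolding NV_def
  proof (rule nn_integral_mono)
    fix x :: "real^'d"
    have "Vw x * \<bar>f1 x - f2 x\<bar> \<le> Vw x * \<bar>f1 x\<bar> + Vw x * \<bar>f2 x\<bar>"
      using Vw_ge1[of x] by (simp add: distrib_left[symmetric] mult_left_mono)
    then have "ennreal (Vw x * \<bar>f1 x - f2 x\<bar>) \<le> ennreal (Vw x * \<bar>f1 x\<bar> + Vw x * \<bar>f2 x\<bar>)" by (rule ennreal_leI)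
    also have "\<dots> = ennreal (Vw x * \<bar>f1 x\<bar>) + ennreal (Vw x * \<bar>f2 x\<bar>)"
      using Vw_ge1[of x] by (intro ennreal_plus) auto
    finally show "ennreal (Vw x * \<bar>f1 x - f2 x\<bar>) \<le> ennreal (Vw x * \<bar>f1 x\<bar>) + ennreal (Vw x * \<bar>f2 x\<bar>)" .
  qed
  also have "\<dots> = NV f1 + NV f2" unfolding NV_def by (rule nn_integral_add) auto
  also have "\<dots> < \<infinity>" using assms unfolding good_def by (simp add: less_top infinity_ennreal_def)
  finally show ?thesis unfolding good_def by simp
qed

lemma zm_diff: assumes "zm f1" "zm f2" shows "zm (\<lambda>y. f1 y - f2 y)"
  using assms good_diff[of f1 f2] good_integrable[of f1] good_integrable[of f2]
  unfolding zm_def by (simp add: Bochner_Integration.integral_diff)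

lemma LL_diff: assumes "good f1" "good f2" shows "LL (\<lambda>y. f1 y - f2 y) y = LL f1 y - LL f2 y"
  unfolding transfer_def
  using Bochner_Integration.integral_diff[OF good_int_k[OF assms(1)] good_int_k[OF assms(2)], of y]
  by (simp add: right_diff_distrib)

lemma LL_cong: assumes [measurable]: "f \<in> borel_measurable lebesgue" "g \<in> borel_measurable lebesgue"
  shows "AE x in lebesgue. f x = g x \<Longrightarrow> LL f y = LL g y"
  unfolding transfer_def by (intro integral_cong_AE) auto

lemma fixed_zero: assumes z: "zm u" and fx: "\<And>y. LL u y = u y" shows "NV u = 0"
proof -
  have it: "(LL ^^ n) u = u" for n
  proof (induction n)
    case (Suc n) show ?case by (simp only: funpow.simps o_apply Suc.IH) (simp add: fun_eq_iff fx)
  qed simp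
  define x where "x = enn2real (NV u)"
  have x0: "0 \<le> x" unfolding x_def by simp
  have le: "x \<le> Cd * \<alpha> ^ n * x" for n using decay[OF z, of n] unfolding it x_def .
  have "x = 0"
  proof (rule ccontr)
    assume "x \<noteq> 0"
    then have xp: "0 < x" using x0 by simp
    obtain n where n: "\<alpha> ^ n < 1 / Cd" using real_arch_pow_inv[of "1 / Cd" \<alpha>] Cd_pos alpha_lt1 by auto
    have "Cd * \<alpha> ^ n < 1" using n Cd_pos by (simp add: field_simps)
    then have "Cd * \<alpha> ^ n * x < x" using xp by simp
    then show False using le[of n] by simp
  qed
  then show ?thesis using NV_fin[of u] z unfolding zm_def x_def by simp
qed

lemma NV_zero_AE: fixes e :: "real^'d \<Rightarrow> real" assumes [measurable]: "e \<in> borel_measurable lebesgue" and "NV e = 0"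
  shows "AE x in lebesgue. e x = 0"
proof -
  have "AE x in lebesgue. ennreal (Vw x * \<bar>e x\<bar>) = 0" using assms(2) unfolding NV_def
    by (subst nn_integral_0_iff_AE[symmetric]) auto
  then show ?thesis
  proof (rule eventually_mono)
    fix x :: "real^'d"
    assume "ennreal (Vw x * \<bar>e x\<bar>) = 0"
    then have "Vw x * \<bar>e x\<bar> \<le> 0" by (simp add: ennreal_eq_0_iff)
    then show "e x = 0" using Vw_ge1[of x] by (smt (verit) mult_pos_pos abs_ge_zero)
  qed
qed

lemma injective: assumes z1: "zm f1" and z2: "zm f2"
  and ae: "AE y in lebesgue. f1 y - LL f1 y = f2 y - LL f2 y"
  shows "AE y in lebesgue. f1 y = f2 y"
proof -
  define e where "e y = f1 y - f2 y" for y
  have ze: "zm e" unfolding e_def by (rule zm_diff[OF z1 z2])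
  have g1: "good f1" and g2: "good f2" using z1 z2 zm_def by auto
  have Le: "LL e y = LL f1 y - LL f2 y" for y unfolding e_def by (rule LL_diff[OF g1 g2])
  have aee: "AE y in lebesgue. LL e y = e y" using ae by eventually_elim (auto simp: Le e_def)
  define u where "u = LL e"
  have zu: "zm u" unfolding u_def by (rule zm_L[OF ze])
  have fixu: "LL u y = u y" for y unfolding u_def
    by (rule LL_cong[OF _ _ aee]) (use zu ze in \<open>auto simp: zm_def good_def u_def\<close>)
  have "NV u = 0" by (rule fixed_zero[OF zu fixu])
  moreover have "NV e = NV u" unfolding u_def using aee by (intro NV_cong) (auto elim: eventually_mono)
  ultimately have "NV e = 0" by simp
  moreover have "e \<in> borel_measurable lebesgue" using ze zm_def good_def by auto
  ultimately have "AE y in lebesgue. e y = 0" using NV_zero_AE by blast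
  then show ?thesis by eventually_elim (simp add: e_def)
qed

end

context harrisD begin

definition "Cst = 1 + Cd * \<alpha> / (1 - \<alpha>) + sqrt 2 + sqrt 2 * (C0 * Cd / (1 - \<alpha>)) * sqrt muD"

lemma resolvent: assumes gV: "g \<in> V_B D"
  shows "\<exists>F \<in> V_B D. (\<forall>y. F y - LL F y = g y) \<and> strong_norm D F \<le> ennreal Cst * strong_norm D g"
proof -
  have zg: "zm g" by (rule VB_zm[OF gV])
  have gg: "good g" using zg zm_def by auto
  have gm[measurable]: "g \<in> borel_measurable lebesgue" using gV VB_iff by auto
  define nvg where "nvg = enn2real (NV g)"
  have nvg0: "0 \<le> nvg" unfolding nvg_def by simp
  have a1: "0 \<le> \<alpha>" "\<alpha> < 1" "norm \<alpha> < 1" using alpha_nn alpha_lt1 by auto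
  define h where "h n = (LL ^^ Suc n) g" for n
  have zh: "zm (h n)" for n unfolding h_def using zm_iter[OF zg] by blast
  have gh: "good (h n)" for n using zh zm_def by auto
  have hm[measurable]: "h n \<in> borel_measurable lebesgue" for n using gh good_def by auto
  define b where "b n = C0 * (Cd * \<alpha> ^ n * nvg)" for n
  have hb: "\<bar>h n y\<bar> \<le> b n" for n y unfolding h_def b_def nvg_def by (rule L_bound_iter[OF zg])
  have b0: "0 \<le> b n" for n unfolding b_def using C0_nn Cd_pos a1 nvg0 by simp
  have bs: "b = (\<lambda>n. (C0 * Cd * nvg) * \<alpha> ^ n)" unfolding b_def by (auto simp: fun_eq_iff algebra_simps)
  have sb: "summable b" unfolding bs by (intro summable_mult summable_geometric a1)
  define S where "S = C0 * Cd * nvg / (1 - \<alpha>)"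
  have sumb: "(\<Sum>n. b n) = S" unfolding bs S_def using a1 by (simp add: suminf_mult suminf_geometric)
  define d where "d n = Cd * \<alpha> ^ Suc n * nvg" for n
  have ds: "d = (\<lambda>n. (Cd * \<alpha> * nvg) * \<alpha> ^ n)" unfolding d_def by (auto simp: fun_eq_iff algebra_simps)
  have sd: "summable d" unfolding ds by (intro summable_mult summable_geometric a1)
  have sumd: "(\<Sum>n. d n) = Cd * \<alpha> * nvg / (1 - \<alpha>)" unfolding ds using a1 by (simp add: suminf_mult suminf_geometric)
  have d0: "0 \<le> d n" for n unfolding d_def using Cd_pos a1 nvg0 by simp
  have hNV: "enn2real (NV (h n)) \<le> d n" for n unfolding h_def d_def nvg_def by (rule decay[OF zg])
  have hNVe: "NV (h n) \<le> ennreal (d n)" for n using NV_fin[OF gh[of n]] hNV[of n] by (metis ennreal_leI)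
  have int_abs: "(\<integral>x. \<bar>f x\<bar> \<partial>lebesgue) \<le> enn2real (NV f)" if "good f" for f :: "real^'d \<Rightarrow> real"
  proof -
    have [measurable]: "f \<in> borel_measurable lebesgue" using that good_def by auto
    have "(\<integral>x. \<bar>f x\<bar> \<partial>lebesgue) = enn2real (N1 f)"
      unfolding N1_def by (subst integral_eq_nn_integral) auto
    also have "\<dots> \<le> enn2real (NV f)"
      using N1_le_NV that unfolding good_def by (intro enn2real_mono) (auto simp: infinity_ennreal_def)
    finally show ?thesis .
  qed
  define H where "H y = (\<Sum>n. h n y)" for y
  have sH: "summable (\<lambda>n. h n y)" for y by (rule summable_comparison_test[OF _ sb]) (use hb in auto)
  have saH: "summable (\<lambda>n. \<bar>h n y\<bar>)" for y by (rule summable_rabs_comparison_test[OF _ sb]) (use hb in auto)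
  have Hb: "\<bar>H y\<bar> \<le> S" for y
  proof -
    have "\<bar>H y\<bar> \<le> (\<Sum>n. \<bar>h n y\<bar>)" unfolding H_def by (rule summable_rabs[OF saH])
    also have "\<dots> \<le> (\<Sum>n. b n)" by (rule suminf_le[OF _ saH sb]) (use hb in auto)
    finally show ?thesis using sumb by simp
  qed
  have Hm[measurable]: "H \<in> borel_measurable lebesgue" unfolding H_def by measurable
  have S0: "0 \<le> S" using Hb[of 0] by linarith
  have ih: "integrable lebesgue (h n)" for n by (rule good_integrable[OF gh])
  have sih: "summable (\<lambda>n. \<integral>x. norm (h n x) \<partial>lebesgue)"
    by (rule summable_comparison_test[OF _ sd]) (use int_abs[OF gh] hNV in \<open>auto intro: order.trans\<close>)
  have aeH: "AE x in lebesgue. summable (\<lambda>n. norm (h n x))" using saH by simp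
  have iH: "integrable lebesgue H" unfolding H_def by (rule integrable_suminf[OF ih aeH sih])
  have intH: "integral\<^sup>L lebesgue H = 0" unfolding H_def integral_suminf[OF ih aeH sih]
    using zh unfolding zm_def by simp
  have kH: "integrable lebesgue (\<lambda>x. \<kappa> x y * H x) \<and> (\<integral>x. \<kappa> x y * H x \<partial>lebesgue) = (\<Sum>n. h (Suc n) y)" for y
  proof -
    have eq: "(\<lambda>x. \<kappa> x y * H x) = (\<lambda>x. \<Sum>i. \<kappa> x y * h i x)"
      unfolding H_def by (auto simp: suminf_mult[OF sH] fun_eq_iff)
    have i1: "integrable lebesgue (\<lambda>x. \<kappa> x y * h i x)" for i by (rule good_int_k[OF gh])
    have sb2: "summable (\<lambda>i. C0 * b i)" by (rule summable_mult[OF sb])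
    have a2: "AE x in lebesgue. summable (\<lambda>i. norm (\<kappa> x y * h i x))"
    proof (rule AE_I2)
      fix x :: "real^'d"
      show "summable (\<lambda>i. norm (\<kappa> x y * h i x))"
        by (rule summable_comparison_test[OF _ sb2])
           (use hb knn kbd C0_nn in \<open>auto simp: abs_mult intro!: mult_mono\<close>)
    qed
    have i1a: "integrable lebesgue (\<lambda>x. \<kappa> x y * \<bar>h i x\<bar>)" for i
      using integrable_abs[OF i1[of i]] knn by (simp add: abs_mult)
    have sd2: "summable (\<lambda>i. C0 * d i)" by (rule summable_mult[OF sd])
    have s3: "summable (\<lambda>i. \<integral>x. norm (\<kappa> x y * h i x) \<partial>lebesgue)"
    proof (rule summable_comparison_test[OF _ sd2], intro exI allI impI)
      fix i :: nat
      have "(\<integral>x. norm (\<kappa> x y * h i x) \<partial>lebesgue) \<le> (\<integral>x. C0 * \<bar>h i x\<bar> \<partial>lebesgue)"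
        by (rule integral_mono) (use i1a ih knn kbd C0_nn in \<open>auto simp: abs_mult intro!: mult_right_mono\<close>)
      also have "\<dots> = C0 * (\<integral>x. \<bar>h i x\<bar> \<partial>lebesgue)" by simp
      also have "\<dots> \<le> C0 * d i" using int_abs[OF gh, of i] hNV[of i] C0_nn by (intro mult_left_mono) auto
      finally show "norm (\<integral>x. norm (\<kappa> x y * h i x) \<partial>lebesgue) \<le> C0 * d i" by simp
    qed
    have "integrable lebesgue (\<lambda>x. \<kappa> x y * H x)" unfolding eq by (rule integrable_suminf[OF i1 a2 s3])
    moreover have "(\<integral>x. \<kappa> x y * H x \<partial>lebesgue) = (\<Sum>i. \<integral>x. \<kappa> x y * h i x \<partial>lebesgue)"
      unfolding eq by (rule integral_suminf[OF i1 a2 s3])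
    moreover have "(\<integral>x. \<kappa> x y * h i x \<partial>lebesgue) = h (Suc i) y" for i
      unfolding h_def by (simp add: transfer_def)
    ultimately show ?thesis by simp
  qed
  define F where "F y = g y + H y" for y
  have Fm[measurable]: "F \<in> borel_measurable lebesgue" unfolding F_def by measurable
  have LF: "LL F y = H y" for y
  proof -
    have "LL F y = (\<integral>x. \<kappa> x y * g x + \<kappa> x y * H x \<partial>lebesgue)"
      unfolding transfer_def F_def by (simp add: distrib_left)
    also have "\<dots> = LL g y + (\<integral>x. \<kappa> x y * H x \<partial>lebesgue)"
      unfolding transfer_def using good_int_k[OF gg] kH by (intro Bochner_Integration.integral_add) auto
    also have "LL g y = h 0 y" unfolding h_def by simp
    also have "(\<integral>x. \<kappa> x y * H x \<partial>lebesgue) = H y - h 0 y"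
      using kH[of y] suminf_split_head[OF sH[of y]] unfolding H_def by simp
    finally show ?thesis by simp
  qed
  have FL: "\<forall>y. F y - LL F y = g y" unfolding LF F_def by simp
  have intF: "integral\<^sup>L lebesgue F = 0"
    unfolding F_def using Bochner_Integration.integral_add[OF good_integrable[OF gg] iH] intH zg
    unfolding zm_def by simp
  have NVF: "NV F \<le> ennreal (nvg + Cd * \<alpha> * nvg / (1 - \<alpha>))"
  proof -
    have "NV F \<le> (\<integral>\<^sup>+x. ennreal (Vw x * \<bar>g x\<bar>) + (\<Sum>n. ennreal (Vw x * \<bar>h n x\<bar>)) \<partial>lebesgue)"
      unfolding NV_def
    proof (rule nn_integral_mono)
      fix x :: "real^'d"
      have sv: "summable (\<lambda>n. Vw x * \<bar>h n x\<bar>)" by (rule summable_mult[OF saH])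
      have "\<bar>F x\<bar> \<le> \<bar>g x\<bar> + (\<Sum>n. \<bar>h n x\<bar>)" unfolding F_def H_def
        using summable_rabs[OF saH[of x]] by linarith
      then have "Vw x * \<bar>F x\<bar> \<le> Vw x * \<bar>g x\<bar> + (\<Sum>n. Vw x * \<bar>h n x\<bar>)"
        using Vw_ge1[of x] by (simp add: suminf_mult[OF saH] distrib_left[symmetric] mult_left_mono)
      then have "ennreal (Vw x * \<bar>F x\<bar>) \<le> ennreal (Vw x * \<bar>g x\<bar> + (\<Sum>n. Vw x * \<bar>h n x\<bar>))"
        by (rule ennreal_leI)
      also have "\<dots> = ennreal (Vw x * \<bar>g x\<bar>) + ennreal (\<Sum>n. Vw x * \<bar>h n x\<bar>)"
        using Vw_ge1[of x] sv by (intro ennreal_plus suminf_nonneg) auto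
      also have "ennreal (\<Sum>n. Vw x * \<bar>h n x\<bar>) = (\<Sum>n. ennreal (Vw x * \<bar>h n x\<bar>))"
        using Vw_ge1[of x] sv by (intro suminf_ennreal2[symmetric]) auto
      finally show "ennreal (Vw x * \<bar>F x\<bar>) \<le> ennreal (Vw x * \<bar>g x\<bar>) + (\<Sum>n. ennreal (Vw x * \<bar>h n x\<bar>))" .
    qed
    also have "\<dots> = NV g + (\<Sum>n. NV (h n))"
      unfolding NV_def by (subst nn_integral_add) (auto simp: nn_integral_suminf)
    also have "\<dots> \<le> ennreal nvg + (\<Sum>n. ennreal (d n))"
      using NV_fin[OF gg] unfolding nvg_def[symmetric]
      by (intro add_mono suminf_le hNVe) auto
    also have "(\<Sum>n. ennreal (d n)) = ennreal (Cd * \<alpha> * nvg / (1 - \<alpha>))"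
      using suminf_ennreal2[OF d0 sd] sumd by simp
    also have "ennreal nvg + ennreal (Cd * \<alpha> * nvg / (1 - \<alpha>)) = ennreal (nvg + Cd * \<alpha> * nvg / (1 - \<alpha>))"
      using nvg0 Cd_pos a1 by (intro ennreal_plus[symmetric]) auto
    finally show ?thesis .
  qed
  have L2g: "L2_on_norm D g < \<infinity>" using gV VB_iff by auto
  define l2 where "l2 = enn2real (L2_on_norm D g)"
  have l20: "0 \<le> l2" unfolding l2_def by simp
  have L2g_eq: "L2_on_norm D g = ennreal l2" using L2g unfolding l2_def by (simp add: less_top infinity_ennreal_def)
  have L2F: "L2_on_norm D F \<le> ennreal (sqrt 2) * L2_on_norm D g + ennreal (sqrt 2 * S * sqrt muD)"
    unfolding F_def by (rule L2_add[OF gm Hm L2g Hb S0])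
  define X where "X = Cd * \<alpha> / (1 - \<alpha>)"
  define Y where "Y = sqrt 2 * (C0 * Cd / (1 - \<alpha>)) * sqrt muD"
  have X0: "0 \<le> X" unfolding X_def using Cd_pos a1 by simp
  have Y0: "0 \<le> Y" unfolding Y_def using Cd_pos a1 C0_nn muD0 by simp
  have CstXY: "Cst = 1 + X + sqrt 2 + Y" unfolding Cst_def X_def Y_def ..
  have SY: "sqrt 2 * S * sqrt muD = Y * nvg" unfolding S_def Y_def by (simp add: field_simps)
  have NVX: "nvg + Cd * \<alpha> * nvg / (1 - \<alpha>) = (1 + X) * nvg" unfolding X_def by (simp add: field_simps)
  have "strong_norm D F \<le> ennreal ((1 + X) * nvg) + (ennreal (sqrt 2) * ennreal l2 + ennreal (Y * nvg))"
    unfolding strong_norm_def L12_NV using NVF L2F unfolding L2g_eq SY NVX by (rule add_mono)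
  also have "\<dots> = ennreal ((1 + X) * nvg + sqrt 2 * l2 + Y * nvg)"
  proof -
    have "ennreal (sqrt 2) * ennreal l2 = ennreal (sqrt 2 * l2)" using l20 by (intro enn_mul) auto
    moreover have "ennreal (sqrt 2 * l2) + ennreal (Y * nvg) = ennreal (sqrt 2 * l2 + Y * nvg)"
      using l20 Y0 nvg0 by (intro ennreal_plus[symmetric]) auto
    moreover have "ennreal ((1 + X) * nvg) + ennreal (sqrt 2 * l2 + Y * nvg) = ennreal ((1 + X) * nvg + (sqrt 2 * l2 + Y * nvg))"
      using l20 Y0 nvg0 X0 by (intro ennreal_plus[symmetric]) auto
    ultimately show ?thesis by (simp add: add.assoc)
  qed
  also have "\<dots> \<le> ennreal (Cst * (nvg + l2))"
  proof (rule ennreal_leI)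
    have "0 \<le> sqrt 2 * nvg + (1 + X + Y) * l2" using nvg0 l20 X0 Y0 by simp
    moreover have "Cst * (nvg + l2) = (1 + X) * nvg + sqrt 2 * l2 + Y * nvg + (sqrt 2 * nvg + (1 + X + Y) * l2)"
      unfolding CstXY by (simp add: algebra_simps)
    ultimately show "(1 + X) * nvg + sqrt 2 * l2 + Y * nvg \<le> Cst * (nvg + l2)" by linarith
  qed
  also have "\<dots> = ennreal Cst * strong_norm D g"
  proof -
    have "strong_norm D g = ennreal (nvg + l2)"
      unfolding strong_norm_def L12_NV L2g_eq using NV_fin[OF gg] nvg_def nvg0 l20 by (simp add: ennreal_plus)
    moreover have "0 \<le> Cst" unfolding CstXY using X0 Y0 by simp
    ultimately show ?thesis using nvg0 l20 by (simp add: ennreal_mult)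
  qed
  finally have bound: "strong_norm D F \<le> ennreal Cst * strong_norm D g" .
  have "strong_norm D F < \<infinity>"
    using bound L2g NV_fin[OF gg] unfolding strong_norm_def L12_NV
    by (metis (no_types, lifting) ennreal_add_eq_top ennreal_mult_eq_top_iff ennreal_neq_top infinity_ennreal_def le_less_trans less_top top.not_eq_extremum)
  then have FV: "F \<in> V_B D" unfolding V_B_def strong_space_def using Fm intF by auto
  show ?thesis using FV FL bound by blast
qed
end

context harrisD begin

lemma L2_diff_fin: assumes [measurable]: "f1 \<in> borel_measurable lebesgue" "f2 \<in> borel_measurable lebesgue"
  and "L2_on_norm D f1 < \<infinity>" "L2_on_norm D f2 < \<infinity>"
  shows "L2_on_norm D (\<lambda>y. f1 y - f2 y) < \<infinity>"
proof -
  have "Il D (\<lambda>y. f1 y - f2 y) \<le> (\<integral>\<^sup>+x. ennreal (2 * (indicator D x * (f1 x)\<^sup>2)) + ennreal (2 * (indicator D x * (f2 x)\<^sup>2)) \<partial>lebesgue)"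
    unfolding Il_def
  proof (rule nn_integral_mono)
    fix x :: "real^'d"
    have "indicator D x * (f1 x - f2 x)\<^sup>2 \<le> 2 * (indicator D x * (f1 x)\<^sup>2) + 2 * (indicator D x * (f2 x)\<^sup>2)"
      using sq2[of "f1 x" "- f2 x"] by (auto simp: indicator_def)
    then have "ennreal (indicator D x * (f1 x - f2 x)\<^sup>2) \<le> ennreal (2 * (indicator D x * (f1 x)\<^sup>2) + 2 * (indicator D x * (f2 x)\<^sup>2))"
      by (rule ennreal_leI)
    also have "\<dots> = ennreal (2 * (indicator D x * (f1 x)\<^sup>2)) + ennreal (2 * (indicator D x * (f2 x)\<^sup>2))"
      by (rule ennreal_plus) (auto simp: indicator_def)
    finally show "ennreal (indicator D x * (f1 x - f2 x)\<^sup>2) \<le> ennreal (2 * (indicator D x * (f1 x)\<^sup>2)) + ennreal (2 * (indicator D x * (f2 x)\<^sup>2))" .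
  qed
  also have "\<dots> = ennreal 2 * Il D f1 + ennreal 2 * Il D f2"
    unfolding Il_def by (subst nn_integral_add) (auto simp: ennreal_mult nn_integral_cmult)
  also have "\<dots> < \<infinity>" using assms(3,4) unfolding L2_fin_iff
    by (simp add: ennreal_mult_less_top)
  finally show ?thesis unfolding L2_fin_iff .
qed

lemma VB_diff: assumes "f1 \<in> V_B D" "f2 \<in> V_B D" shows "(\<lambda>y. f1 y - f2 y) \<in> V_B D"
proof -
  have z: "zm (\<lambda>y. f1 y - f2 y)" by (rule zm_diff[OF VB_zm[OF assms(1)] VB_zm[OF assms(2)]])
  have "L2_on_norm D (\<lambda>y. f1 y - f2 y) < \<infinity>" using assms unfolding VB_iff by (intro L2_diff_fin) auto
  then show ?thesis using z unfolding VB_iff zm_def good_def by auto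
qed

lemma strong_cong: "AE x in lebesgue. f x = g x \<Longrightarrow> strong_norm D f = strong_norm D g"
  unfolding strong_norm_def L12_NV using NV_cong L2_cong by metis

lemma main:
  shows "(\<forall>f\<in>V_B D. (\<lambda>n. strong_norm D ((transfer \<kappa> ^^ n) f)) \<longlonglongrightarrow> 0)
       \<and> (\<forall>f\<in>V_B D. transfer \<kappa> f \<in> V_B D)
       \<and> (\<forall>g\<in>V_B D. \<exists>f\<in>V_B D. AE y in lebesgue. f y - transfer \<kappa> f y = g y)
       \<and> (\<forall>f\<^sub>1\<in>V_B D. \<forall>f\<^sub>2\<in>V_B D.
            (AE y in lebesgue. f\<^sub>1 y - transfer \<kappa> f\<^sub>1 y = f\<^sub>2 y - transfer \<kappa> f\<^sub>2 y)
            \<longrightarrow> (AE y in lebesgue. f\<^sub>1 y = f\<^sub>2 y))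
       \<and> (\<exists>C::real. \<forall>f\<in>V_B D. strong_norm D f \<le> ennreal C * strong_norm D (\<lambda>y. f y - transfer \<kappa> f y))"
proof (intro conjI ballI impI)
  show "(\<lambda>n. strong_norm D ((transfer \<kappa> ^^ n) f)) \<longlonglongrightarrow> 0" if "f \<in> V_B D" for f using part1[OF that] .
  show "transfer \<kappa> f \<in> V_B D" if "f \<in> V_B D" for f using VB_L[OF that] .
  show "\<exists>f\<in>V_B D. AE y in lebesgue. f y - transfer \<kappa> f y = g y" if "g \<in> V_B D" for g
    using resolvent[OF that] by auto
  show "AE y in lebesgue. f1 y = f2 y"
    if "f1 \<in> V_B D" "f2 \<in> V_B D" "AE y in lebesgue. f1 y - transfer \<kappa> f1 y = f2 y - transfer \<kappa> f2 y" for f1 f2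
    using injective[OF VB_zm[OF that(1)] VB_zm[OF that(2)] that(3)] .
  show "\<exists>C::real. \<forall>f\<in>V_B D. strong_norm D f \<le> ennreal C * strong_norm D (\<lambda>y. f y - transfer \<kappa> f y)"
  proof (intro exI ballI)
    fix f assume fV: "f \<in> V_B D"
    define g where "g y = f y - LL f y" for y
    have gV: "g \<in> V_B D" unfolding g_def by (rule VB_diff[OF fV VB_L[OF fV]])
    obtain F where FV: "F \<in> V_B D" and FL: "\<forall>y. F y - LL F y = g y"
      and Fb: "strong_norm D F \<le> ennreal Cst * strong_norm D g"
      using resolvent[OF gV] by blast
    have "AE y in lebesgue. f y = F y"
      by (rule injective[OF VB_zm[OF fV] VB_zm[OF FV]]) (use FL in \<open>auto simp: g_def\<close>)
    then have "strong_norm D f = strong_norm D F" by (rule strong_cong)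
    with Fb show "strong_norm D f \<le> ennreal Cst * strong_norm D (\<lambda>y. f y - transfer \<kappa> f y)"
      unfolding g_def by simp
  qed
qed

end

lemma flow_bound:
  fixes b :: "real^'d \<Rightarrow> real^'d" and \<theta> :: "real \<Rightarrow> real^'d \<Rightarrow> real^'d"
  assumes flow: "is_forward_flow b \<theta>" and c2: "0 < c2"
    and diss: "\<And>x. b x \<bullet> x \<le> c1 - c2 * (norm x)\<^sup>2"
  shows "(norm (\<theta> 1 x))\<^sup>2 \<le> exp (- 2 * c2) * (norm x)\<^sup>2 + c1 / c2"
proof -
  have c1: "0 \<le> c1" using diss[of 0] c2 by simp
  define p where "p s = \<theta> s x" for s
  have p0: "p 0 = x" using flow unfolding is_forward_flow_def p_def by simp
  have pd: "(p has_vector_derivative b (p t)) (at t within {0..})" if "0 \<le> t" for t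
    using flow that unfolding is_forward_flow_def p_def by simp
  define N where "N s = p s \<bullet> p s" for s
  define \<phi> where "\<phi> s = exp (2 * c2 * s) * (N s - c1 / c2)" for s
  define Dv where "Dv t = exp (2 * c2 * t) * (2 * c2 * (N t - c1 / c2) + 2 * (p t \<bullet> b (p t)))" for t
  have Nd: "(N has_real_derivative 2 * (p t \<bullet> b (p t))) (at t within {0..})" if "0 \<le> t" for t
  proof -
    have pd': "(p has_derivative (\<lambda>h. h *\<^sub>R b (p t))) (at t within {0..})"
      using pd[OF that] unfolding has_vector_derivative_def .
    have "((\<lambda>s. p s \<bullet> p s) has_derivative (\<lambda>h. p t \<bullet> (h *\<^sub>R b (p t)) + (h *\<^sub>R b (p t)) \<bullet> p t)) (at t within {0..})"
      by (rule has_derivative_inner[OF pd' pd'])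
    moreover have "(\<lambda>h. p t \<bullet> (h *\<^sub>R b (p t)) + (h *\<^sub>R b (p t)) \<bullet> p t) = (*) (2 * (p t \<bullet> b (p t)))"
      by (auto simp: fun_eq_iff inner_commute algebra_simps)
    ultimately show ?thesis unfolding has_field_derivative_def N_def by simp
  qed
  have phid: "(\<phi> has_real_derivative Dv t) (at t within {0..})" if "0 \<le> t" for t
    unfolding \<phi>_def Dv_def
    by (rule derivative_eq_intros Nd[OF that] refl | simp)+ (simp add: algebra_simps)
  have Dv_le: "Dv t \<le> 0" if "0 \<le> t" for t
  proof -
    have "p t \<bullet> b (p t) \<le> c1 - c2 * N t"
      using diss[of "p t"] by (simp add: N_def inner_commute power2_norm_eq_inner)
    moreover have "2 * c2 * (N t - c1 / c2) = 2 * c2 * N t - 2 * c1" using c2 by (simp add: field_simps)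
    ultimately have "2 * c2 * (N t - c1 / c2) + 2 * (p t \<bullet> b (p t)) \<le> 0" by linarith
    then show ?thesis unfolding Dv_def by (simp add: mult_nonneg_nonpos)
  qed
  have cont: "continuous_on {0..1} \<phi>"
    unfolding continuous_on_eq_continuous_within
  proof
    fix t assume "t \<in> {0..1::real}"
    then have "continuous (at t within {0..}) \<phi>" using phid[of t] by (intro DERIV_continuous) auto
    then show "continuous (at t within {0..1}) \<phi>" by (rule continuous_within_subset) auto
  qed
  obtain \<xi> where xi: "0 < \<xi>" "\<xi> < 1" "\<phi> 1 - \<phi> 0 = (*) (Dv \<xi>) (1 - 0)"
  proof (rule mvt[of 0 1 \<phi> "\<lambda>t. (*) (Dv t)"])
    show "(\<phi> has_derivative (*) (Dv t)) (at t)" if "0 < t" "t < 1" for t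
    proof -
      have "t \<in> interior {0..}" using that by simp
      then have "at t within {0..} = at t" by (rule at_within_interior)
      then show ?thesis using phid[of t] that unfolding has_field_derivative_def by simp
    qed
  qed (use cont in auto)
  then have "\<phi> 1 \<le> \<phi> 0" using Dv_le[of \<xi>] by simp
  then have "exp (2 * c2) * ((norm (\<theta> 1 x))\<^sup>2 - c1 / c2) \<le> (norm x)\<^sup>2 - c1 / c2"
    unfolding \<phi>_def N_def p_def using p0 unfolding p_def by (simp add: power2_norm_eq_inner)
  then have "(norm (\<theta> 1 x))\<^sup>2 - c1 / c2 \<le> exp (- 2 * c2) * ((norm x)\<^sup>2 - c1 / c2)"
    by (simp add: exp_minus field_simps)
  moreover have "0 \<le> exp (- 2 * c2) * (c1 / c2)" using c1 c2 by simp
  ultimately show ?thesis by (simp add: algebra_simps)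
qed

lemma dist_mass: assumes "prob_space M" "distributed M lborel X f" shows "(\<integral>\<^sup>+x. f x \<partial>lborel) = 1"
proof -
  have all: "distr M lborel X = density lborel f \<and> f \<in> borel_measurable lborel \<and> X \<in> measurable M lborel"
    using assms(2) by (simp only: distributed_def)
  then have d: "distr M lborel X = density lborel f" and fm: "f \<in> borel_measurable lborel"
    and Xm: "X \<in> measurable M lborel" by (rule conjunct1, rule conjunct1[OF conjunct2], rule conjunct2[OF conjunct2])
  have "emeasure (distr M lborel X) (space lborel) = emeasure M (X -` space lborel \<inter> space M)"
    by (rule emeasure_distr[OF Xm]) simp
  also have "\<dots> = emeasure M (space M)" by simp
  also have "\<dots> = 1" using prob_space.emeasure_space_1[OF assms(1)] .
  finally have "emeasure (density lborel f) UNIV = 1" using d by simp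
  then show ?thesis using fm by (simp add: emeasure_density)
qed

lemma lborel_shift: fixes f :: "'a::euclidean_space \<Rightarrow> ennreal"
  assumes [measurable]: "f \<in> borel_measurable borel"
  shows "(\<integral>\<^sup>+x. f x \<partial>lborel) = (\<integral>\<^sup>+x. f (t + x) \<partial>lborel)"
  by (subst lborel_affine[of 1 t]) (simp_all add: nn_integral_density nn_integral_distr)

lemma gauss_fin:
  fixes W :: "real \<Rightarrow> 'a \<Rightarrow> real^'d"
  assumes BM: "std_brownian M W" and a: "0 < a"
  shows "(\<integral>\<^sup>+z. ennreal (exp (- a * (norm z)\<^sup>2)) \<partial>(lborel :: (real^'d) measure)) < \<infinity>"
proof -
  define \<tau> where "\<tau> = 1 / (2 * a)"
  have tau: "0 < \<tau>" unfolding \<tau>_def using a by simp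
  have ps: "prob_space M" using BM std_brownian_def by auto
  have "\<forall>s t. 0 \<le> s \<and> s < t \<longrightarrow> distributed M lborel (\<lambda>\<omega>. W t \<omega> - W s \<omega>) (\<lambda>z. ennreal (gauss_density (t - s) z))"
    using BM unfolding std_brownian_def by blast
  then have "distributed M lborel (\<lambda>\<omega>. W \<tau> \<omega> - W 0 \<omega>) (\<lambda>z. ennreal (gauss_density (\<tau> - 0) z))"
    using tau by blast
  then have m1: "(\<integral>\<^sup>+z. ennreal (gauss_density \<tau> z) \<partial>(lborel :: (real^'d) measure)) = 1"
    using dist_mass[OF ps] by simp
  define c where "c = (2 * pi * \<tau>) powr (- real CARD('d) / 2)"
  have c: "0 < c" unfolding c_def using tau by simp
  have gd: "gauss_density \<tau> z = c * exp (- a * (norm z)\<^sup>2)" for z :: "real^'d"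
    unfolding gauss_density_def c_def \<tau>_def using a by (simp add: field_simps)
  have "(\<integral>\<^sup>+z. ennreal (gauss_density \<tau> z) \<partial>(lborel :: (real^'d) measure))
      = ennreal c * (\<integral>\<^sup>+z. ennreal (exp (- a * (norm z)\<^sup>2)) \<partial>(lborel :: (real^'d) measure))"
    unfolding gd using c by (subst nn_integral_cmult[symmetric]) (auto simp: ennreal_mult)
  with m1 have "ennreal c * (\<integral>\<^sup>+z. ennreal (exp (- a * (norm z)\<^sup>2)) \<partial>(lborel :: (real^'d) measure)) = 1" by simp
  then have ne: "(\<integral>\<^sup>+z. ennreal (exp (- a * (norm z)\<^sup>2)) \<partial>(lborel :: (real^'d) measure)) \<noteq> top"
    using c by (auto simp: ennreal_mult_eq_top_iff)
  then show ?thesis by (simp add: less_top infinity_ennreal_def)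
qed

lemma sqineq: fixes y t :: "real^'d" assumes e: "0 < e"
  shows "(norm y)\<^sup>2 \<le> (1 + e) * (norm t)\<^sup>2 + (1 + 1/e) * (norm (y - t))\<^sup>2"
proof -
  have "norm y \<le> norm t + norm (y - t)" using norm_triangle_ineq[of t "y - t"] by simp
  then have "(norm y)\<^sup>2 \<le> (norm t + norm (y - t))\<^sup>2" by (intro power_mono) auto
  also have "\<dots> \<le> (1 + e) * (norm t)\<^sup>2 + (1 + 1/e) * (norm (y - t))\<^sup>2"
  proof -
    define u v where "u = norm t" and "v = norm (y - t)"
    have "0 \<le> (e * u - v)\<^sup>2 / e" using e by simp
    moreover have "(e * u - v)\<^sup>2 / e = e * u\<^sup>2 - 2 * u * v + v\<^sup>2 / e" using e
      by (simp add: power2_eq_square field_simps)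
    ultimately have "2 * u * v \<le> e * u\<^sup>2 + v\<^sup>2 / e" by linarith
    then show ?thesis unfolding u_def[symmetric] v_def[symmetric]
      by (simp add: power2_eq_square algebra_simps)
  qed
  finally show ?thesis .
qed

theorem proposition3p8:
  fixes b :: "real^'d \<Rightarrow> real^'d"
    and M :: "'a measure"
    and W :: "real \<Rightarrow> 'a \<Rightarrow> real^'d"
    and X :: "real^'d \<Rightarrow> real \<Rightarrow> 'a \<Rightarrow> real^'d"
    and \<theta> :: "real \<Rightarrow> real^'d \<Rightarrow> real^'d"
    and \<kappa> :: "real^'d \<Rightarrow> real^'d \<Rightarrow> real"
    and D :: "(real^'d) set"
    and lam\<^sub>0 lam\<^sub>1 C\<^sub>0 C\<^sub>1 :: real
  assumes loc_lip: "\<And>x\<^sub>0. \<exists>K>0. \<exists>\<delta>\<^sub>0>0. \<forall>x. norm (x\<^sub>0 - x) < \<delta>\<^sub>0 \<longrightarrow>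
                         norm (b x\<^sub>0 - b x) \<le> K * norm (x\<^sub>0 - x)"
    and dissip: "\<exists>c\<^sub>1::real. \<exists>c\<^sub>2>0. \<forall>x. b x \<bullet> x \<le> c\<^sub>1 - c\<^sub>2 * (norm x)\<^sup>2"
    and BM: "std_brownian M W"
    and sol: "\<And>x. sde_solution M b W x (X x)"
    and flow: "is_forward_flow b \<theta>"
    and dens: "\<And>x. distributed M lborel (X x 1) (\<lambda>y. ennreal (\<kappa> x y))"
    and kcont: "continuous_on UNIV (\<lambda>(x, y). \<kappa> x y)"
    and cnst: "0 < lam\<^sub>0" "lam\<^sub>0 \<le> 1" "0 < lam\<^sub>1" "lam\<^sub>1 \<le> 1" "1 \<le> C\<^sub>0" "1 \<le> C\<^sub>1"
    and klow: "\<And>x y. exp (- (norm (\<theta> 1 x - y))\<^sup>2 / lam\<^sub>0) / C\<^sub>0 \<le> \<kappa> x y"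
    and kup: "\<And>x y. \<kappa> x y \<le> C\<^sub>0 * exp (- lam\<^sub>0 * (norm (\<theta> 1 x - y))\<^sup>2)"
    and kgradx: "\<And>x y. \<exists>g. ((\<lambda>x'. \<kappa> x' y) has_derivative (\<lambda>h. g \<bullet> h)) (at x) \<and>
                       norm g \<le> C\<^sub>1 * exp (- lam\<^sub>1 * (norm (\<theta> 1 x - y))\<^sup>2)"
    and kgrady: "\<And>x y. \<exists>g. ((\<lambda>y'. \<kappa> x y') has_derivative (\<lambda>h. g \<bullet> h)) (at y) \<and>
                       norm g \<le> C\<^sub>1 * exp (- lam\<^sub>1 * (norm (\<theta> 1 x - y))\<^sup>2)"
    and D: "compact D" "0 \<in> interior D"
  shows "(\<forall>f\<in>V_B D. (\<lambda>n. strong_norm D ((transfer \<kappa> ^^ n) f)) \<longlonglongrightarrow> 0)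
       \<and> (\<forall>f\<in>V_B D. transfer \<kappa> f \<in> V_B D)
       \<and> (\<forall>g\<in>V_B D. \<exists>f\<in>V_B D. AE y in lebesgue. f y - transfer \<kappa> f y = g y)
       \<and> (\<forall>f\<^sub>1\<in>V_B D. \<forall>f\<^sub>2\<in>V_B D.
            (AE y in lebesgue. f\<^sub>1 y - transfer \<kappa> f\<^sub>1 y = f\<^sub>2 y - transfer \<kappa> f\<^sub>2 y)
            \<longrightarrow> (AE y in lebesgue. f\<^sub>1 y = f\<^sub>2 y))
       \<and> (\<exists>C::real. \<forall>f\<in>V_B D. strong_norm D f \<le> ennreal C * strong_norm D (\<lambda>y. f y - transfer \<kappa> f y))"
proof -
  obtain c1 c2 where c2: "0 < c2" and diss: "\<And>x. b x \<bullet> x \<le> c1 - c2 * (norm x)\<^sup>2" using dissip by blast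
  have c1: "0 \<le> c1" using diss[of 0] c2 by simp
  define q where "q = exp (- 2 * c2)"
  have q: "0 < q" "q < 1" using c2 by (auto simp: q_def)
  have fb: "(norm (\<theta> 1 x))\<^sup>2 \<le> q * (norm x)\<^sup>2 + c1 / c2" for x
    unfolding q_def by (rule flow_bound[OF flow c2 diss])
  have knn: "0 \<le> \<kappa> x y" for x y
  proof -
    have "0 < exp (- (norm (\<theta> 1 x - y))\<^sup>2 / lam\<^sub>0) / C\<^sub>0" using cnst by simp
    then show ?thesis using klow[of x y] by linarith
  qed
  have kbd: "\<kappa> x y \<le> C\<^sub>0" for x y
  proof -
    have "exp (- lam\<^sub>0 * (norm (\<theta> 1 x - y))\<^sup>2) \<le> 1" using cnst by simp
    then have "C\<^sub>0 * exp (- lam\<^sub>0 * (norm (\<theta> 1 x - y))\<^sup>2) \<le> C\<^sub>0 * 1" using cnst by (intro mult_left_mono) auto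
    then show ?thesis using kup[of x y] by linarith
  qed
  have kB[measurable]: "(\<lambda>p. \<kappa> (fst p) (snd p)) \<in> borel_measurable borel"
    using borel_measurable_continuous_onI[OF kcont] by (simp add: case_prod_beta')
  have idl: "(\<lambda>x::real^'d. x) \<in> lebesgue \<rightarrow>\<^sub>M borel"
    using id_borel_measurable_lebesgue by (simp add: id_def)
  have kmeas: "(\<lambda>p. \<kappa> (fst p) (snd p)) \<in> borel_measurable (lebesgue \<Otimes>\<^sub>M lebesgue)"
  proof -
    have "(\<lambda>p::((real^'d) \<times> (real^'d)). (fst p, snd p)) \<in> (lebesgue \<Otimes>\<^sub>M lebesgue) \<rightarrow>\<^sub>M (borel \<Otimes>\<^sub>M borel)"
    proof -
      have f1: "(\<lambda>p. fst p) \<in> (lebesgue \<Otimes>\<^sub>M lebesgue) \<rightarrow>\<^sub>M (borel :: (real^'d) measure)"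
        by (rule measurable_compose[OF measurable_fst idl])
      have f2: "(\<lambda>p. snd p) \<in> (lebesgue \<Otimes>\<^sub>M lebesgue) \<rightarrow>\<^sub>M (borel :: (real^'d) measure)"
        by (rule measurable_compose[OF measurable_snd idl])
      show ?thesis by (rule measurable_Pair[OF f1 f2])
    qed
    then have "(\<lambda>p. p) \<in> (lebesgue \<Otimes>\<^sub>M lebesgue) \<rightarrow>\<^sub>M (borel :: ((real^'d) \<times> (real^'d)) measure)"
      by (simp add: borel_prod)
    from measurable_compose[OF this kB] show ?thesis .
  qed
  have kyB[measurable]: "(\<lambda>y. \<kappa> x y) \<in> borel_measurable borel" for x
  proof -
    have "(\<lambda>y. (x, y)) \<in> (borel :: (real^'d) measure) \<rightarrow>\<^sub>M borel" by measurable
    from measurable_compose[OF this kB] show ?thesis by simp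
  qed
  have ps: "prob_space M" using BM std_brownian_def by auto
  have kmass: "(\<integral>\<^sup>+y. ennreal (\<kappa> x y) \<partial>lebesgue) = 1" for x
    using dist_mass[OF ps dens[of x]] by (simp add: nn_integral_completion)
  define a2 where "a2 = lam\<^sub>0 / 2"
  have a2: "0 < a2" using cnst by (simp add: a2_def)
  have Gfin: "(\<integral>\<^sup>+z. ennreal (exp (- a2 * (norm z)\<^sup>2)) \<partial>(lborel::(real^'d) measure)) < \<infinity>"
    by (rule gauss_fin[OF BM a2])
  define g2 where "g2 = enn2real (\<integral>\<^sup>+z. ennreal (exp (- a2 * (norm z)\<^sup>2)) \<partial>(lborel::(real^'d) measure))"
  have Geq: "(\<integral>\<^sup>+z. ennreal (exp (- a2 * (norm z)\<^sup>2)) \<partial>(lborel::(real^'d) measure)) = ennreal g2"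
    using Gfin unfolding g2_def by (simp add: less_top infinity_ennreal_def)
  have g20: "0 \<le> g2" unfolding g2_def by simp
  define M2 where "M2 = C\<^sub>0 * (2 / lam\<^sub>0) * g2"
  have M20: "0 \<le> M2" unfolding M2_def using cnst g20 by simp
  have mom: "(\<integral>\<^sup>+y. ennreal ((norm (y - \<theta> 1 x))\<^sup>2 * \<kappa> x y) \<partial>lebesgue) \<le> ennreal M2" for x
  proof -
    define t where "t = \<theta> 1 x"
    have pw: "(norm (y - t))\<^sup>2 * \<kappa> x y \<le> C\<^sub>0 * (2 / lam\<^sub>0) * exp (- a2 * (norm (y - t))\<^sup>2)" for y
    proof -
      define r where "r = (norm (y - t))\<^sup>2"
      have r0: "0 \<le> r" unfolding r_def by simp
      have "r * \<kappa> x y \<le> r * (C\<^sub>0 * exp (- lam\<^sub>0 * r))"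
        using kup[of x y] r0 unfolding r_def t_def by (intro mult_left_mono) (auto simp: norm_minus_commute)
      moreover have "r \<le> (2 / lam\<^sub>0) * exp (lam\<^sub>0 * r / 2)"
      proof -
        have "1 + lam\<^sub>0 * r / 2 \<le> exp (lam\<^sub>0 * r / 2)" by (rule exp_ge_add_one_self)
        then have "lam\<^sub>0 * r / 2 \<le> exp (lam\<^sub>0 * r / 2)" by linarith
        then show ?thesis using cnst by (simp add: field_simps)
      qed
      then have "r * exp (- lam\<^sub>0 * r) \<le> (2 / lam\<^sub>0) * exp (lam\<^sub>0 * r / 2) * exp (- lam\<^sub>0 * r)"
        by (intro mult_right_mono) auto
      then have "r * exp (- lam\<^sub>0 * r) \<le> (2 / lam\<^sub>0) * exp (- a2 * r)"
        by (simp add: mult.assoc exp_add[symmetric] a2_def field_simps)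
      then have "C\<^sub>0 * (r * exp (- lam\<^sub>0 * r)) \<le> C\<^sub>0 * ((2 / lam\<^sub>0) * exp (- a2 * r))"
        using cnst by (intro mult_left_mono) auto
      ultimately show ?thesis unfolding r_def[symmetric] by (simp add: algebra_simps)
    qed
    have "(\<integral>\<^sup>+y. ennreal ((norm (y - \<theta> 1 x))\<^sup>2 * \<kappa> x y) \<partial>lebesgue)
        \<le> (\<integral>\<^sup>+y. ennreal (C\<^sub>0 * (2 / lam\<^sub>0)) * ennreal (exp (- a2 * (norm (y - t))\<^sup>2)) \<partial>lebesgue)"
      unfolding t_def[symmetric]
    proof (rule nn_integral_mono)
      fix y :: "real^'d"
      have "ennreal ((norm (y - t))\<^sup>2 * \<kappa> x y) \<le> ennreal (C\<^sub>0 * (2 / lam\<^sub>0) * exp (- a2 * (norm (y - t))\<^sup>2))"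
        by (rule ennreal_leI[OF pw])
      also have "\<dots> = ennreal (C\<^sub>0 * (2 / lam\<^sub>0)) * ennreal (exp (- a2 * (norm (y - t))\<^sup>2))"
        using cnst by (intro ennreal_mult) auto
      finally show "ennreal ((norm (y - t))\<^sup>2 * \<kappa> x y) \<le> ennreal (C\<^sub>0 * (2 / lam\<^sub>0)) * ennreal (exp (- a2 * (norm (y - t))\<^sup>2))" .
    qed
    also have "\<dots> = ennreal (C\<^sub>0 * (2 / lam\<^sub>0)) * (\<integral>\<^sup>+y. ennreal (exp (- a2 * (norm (y - t))\<^sup>2)) \<partial>lborel)"
      by (simp add: nn_integral_completion nn_integral_cmult)
    also have "(\<integral>\<^sup>+y. ennreal (exp (- a2 * (norm (y - t))\<^sup>2)) \<partial>lborel) = (\<integral>\<^sup>+z. ennreal (exp (- a2 * (norm z)\<^sup>2)) \<partial>(lborel::(real^'d) measure))"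
      by (subst lborel_shift[where t=t]) simp_all
    also have "ennreal (C\<^sub>0 * (2 / lam\<^sub>0)) * \<dots> = ennreal M2"
      unfolding Geq M2_def using cnst g20 by (intro enn_mul) auto
    finally show ?thesis .
  qed
  define e where "e = (1 - q) / (2 * q)"
  have e: "0 < e" unfolding e_def using q by simp
  define \<gamma> where "\<gamma> = (1 + q) / 2"
  have gq: "(1 + e) * q = \<gamma>" unfolding e_def \<gamma>_def using q by (simp add: field_simps)
  have gam: "0 \<le> \<gamma>" "\<gamma> < 1" unfolding \<gamma>_def using q by auto
  define K where "K = 1 + (1 + e) * (c1 / c2) + (1 + 1 / e) * M2"
  have K1: "1 \<le> K" unfolding K_def using e c1 c2 M20 by (simp add: add_nonneg_nonneg)
  have lyap: "(\<integral>\<^sup>+y. ennreal (Vw y * \<kappa> x y) \<partial>lebesgue) \<le> ennreal (\<gamma> * Vw x + K)" for x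
  proof -
    define t where "t = \<theta> 1 x"
    define A where "A = 1 + (1 + e) * (norm t)\<^sup>2"
    define B where "B = 1 + 1 / e"
    have A0: "0 \<le> A" and B0: "0 \<le> B" unfolding A_def B_def using e by auto
    have "(\<integral>\<^sup>+y. ennreal (Vw y * \<kappa> x y) \<partial>lebesgue)
        \<le> (\<integral>\<^sup>+y. ennreal A * ennreal (\<kappa> x y) + ennreal B * ennreal ((norm (y - \<theta> 1 x))\<^sup>2 * \<kappa> x y) \<partial>lebesgue)"
    proof (rule nn_integral_mono)
      fix y :: "real^'d"
      have "(norm y)\<^sup>2 \<le> (1 + e) * (norm t)\<^sup>2 + B * (norm (y - t))\<^sup>2" unfolding B_def by (rule sqineq[OF e])
      then have "Vw y \<le> A + B * (norm (y - t))\<^sup>2" unfolding Vw_def A_def by simp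
      then have "Vw y * \<kappa> x y \<le> (A + B * (norm (y - t))\<^sup>2) * \<kappa> x y" using knn[of x y] by (rule mult_right_mono)
      then have "ennreal (Vw y * \<kappa> x y) \<le> ennreal (A * \<kappa> x y + B * ((norm (y - t))\<^sup>2 * \<kappa> x y))"
        by (intro ennreal_leI) (simp add: algebra_simps)
      also have "\<dots> = ennreal A * ennreal (\<kappa> x y) + ennreal B * ennreal ((norm (y - t))\<^sup>2 * \<kappa> x y)"
        using A0 B0 knn[of x y] by (subst ennreal_plus) (auto simp: ennreal_mult)
      finally show "ennreal (Vw y * \<kappa> x y) \<le> ennreal A * ennreal (\<kappa> x y) + ennreal B * ennreal ((norm (y - \<theta> 1 x))\<^sup>2 * \<kappa> x y)"
        unfolding t_def .
    qed
    also have "\<dots> = ennreal A * (\<integral>\<^sup>+y. ennreal (\<kappa> x y) \<partial>lebesgue) + ennreal B * (\<integral>\<^sup>+y. ennreal ((norm (y - \<theta> 1 x))\<^sup>2 * \<kappa> x y) \<partial>lebesgue)"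
    proof -
      have m1: "(\<lambda>y. \<kappa> x y) \<in> borel_measurable lebesgue" by (rule measurable_completion) (simp add: kyB)
      have m2: "(\<lambda>y. (norm (y - \<theta> 1 x))\<^sup>2 * \<kappa> x y) \<in> borel_measurable lebesgue"
        by (rule measurable_completion) (simp, measurable)
      show ?thesis using m1 m2 by (subst nn_integral_add) (auto simp: nn_integral_cmult)
    qed
    also have "\<dots> \<le> ennreal A * 1 + ennreal B * ennreal M2"
      unfolding kmass by (intro add_mono mult_left_mono mom) auto
    also have "\<dots> = ennreal (A + B * M2)" using A0 B0 M20 by (simp add: ennreal_plus ennreal_mult)
    also have "\<dots> \<le> ennreal (\<gamma> * Vw x + K)"
    proof (rule ennreal_leI)
      have "(1 + e) * (norm t)\<^sup>2 \<le> (1 + e) * (q * (norm x)\<^sup>2 + c1 / c2)"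
        using fb[of x] e unfolding t_def by (intro mult_left_mono) auto
      also have "\<dots> = \<gamma> * (norm x)\<^sup>2 + (1 + e) * (c1 / c2)" by (simp only: distrib_left mult.assoc[symmetric] gq)
      finally have "(1 + e) * (norm t)\<^sup>2 \<le> \<gamma> * (norm x)\<^sup>2 + (1 + e) * (c1 / c2)" .
      then show "A + B * M2 \<le> \<gamma> * Vw x + K" unfolding A_def B_def K_def Vw_def using gam
        by (simp add: algebra_simps)
    qed
    finally show ?thesis .
  qed
  define R where "R = 8 * K / (1 - \<gamma>)"
  have R0: "0 < R" unfolding R_def using K1 gam by simp
  define r0 where "r0 = sqrt (q * R + c1 / c2)"
  define \<epsilon> where "\<epsilon> = exp (- (r0 + 1)\<^sup>2 / lam\<^sub>0) / C\<^sub>0"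
  have eps: "0 < \<epsilon>" unfolding \<epsilon>_def using cnst by simp
  have minor: "\<epsilon> \<le> \<kappa> x y" if "Vw x \<le> R" "norm y \<le> 1" for x y
  proof -
    have "(norm x)\<^sup>2 \<le> R" using that(1) unfolding Vw_def by simp
    then have "(norm (\<theta> 1 x))\<^sup>2 \<le> q * R + c1 / c2" using fb[of x] q by (smt (verit) mult_left_mono)
    then have "norm (\<theta> 1 x) \<le> r0" unfolding r0_def by (rule real_le_rsqrt)
    moreover have "norm (\<theta> 1 x - y) \<le> norm (\<theta> 1 x) + norm y" by (rule norm_triangle_ineq4)
    ultimately have "norm (\<theta> 1 x - y) \<le> r0 + 1" using that(2) by linarith
    then have "(norm (\<theta> 1 x - y))\<^sup>2 \<le> (r0 + 1)\<^sup>2" by (intro power_mono) auto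
    then have "- (r0 + 1)\<^sup>2 / lam\<^sub>0 \<le> - (norm (\<theta> 1 x - y))\<^sup>2 / lam\<^sub>0" using cnst by (simp add: divide_right_mono)
    then have "exp (- (r0 + 1)\<^sup>2 / lam\<^sub>0) / C\<^sub>0 \<le> exp (- (norm (\<theta> 1 x - y))\<^sup>2 / lam\<^sub>0) / C\<^sub>0"
      using cnst by (intro divide_right_mono) auto
    then show ?thesis using klow[of x y] unfolding \<epsilon>_def by linarith
  qed
  define vb where "vb = measure lborel (cball (0::real^'d) 1)"
  interpret H: harrisD \<kappa> "C\<^sub>0" \<gamma> K \<epsilon> R vb D
  proof unfold_locales
    show "(\<lambda>p. \<kappa> (fst p) (snd p)) \<in> borel_measurable (lebesgue \<Otimes>\<^sub>M lebesgue)" by (rule kmeas)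
  qed (use knn kbd kmass lyap minor gam K1 eps D in \<open>auto simp: R_def vb_def\<close>)
  show ?thesis using H.main by simp
qed

end
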